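(* Every cutting sequence of a linear trajectory on $S_E$ is infinitely derivable.
   Context: Let $E$ be the regular hexagon of side length $1$, centred at the origin, with two horizontal sides. Its sides are labelled as follows: the two horizontal sides are labelled $A$, the upper-right and lower-left sides are labelled $B$, and the lower-right and upper-left sides are labelled $C$. Gluing opposite parallel sides by translations gives $S_E$ (a flat torus with two marked points, the classes of the vertices). A linear trajectory is a bi-infinite straight line on $S_E$ avoiding the marked points. Its cutting sequence $c(\tau)\in\{A,B,C\}^{\mathbb Z}$ lists, up to shift, the labels of the sides successively crossed. For an ordered triple $(x,y,z)$ of the three distinct letters $A,B,C$, the associated diagram is the directed graph on $\{A,B,C\}$ with exactly the arrows $x\to y$, $y\to x$, $y\to z$, $z\to y$, $z\to z$. The six transition diagrams are those of the following triples: - $\mathscr D_0$: $(A,C,B)$; - $\mathscr D_1$: $(C,A,B)$; - $\mathscr D_2$: $(C,B,A)$; - $\mathscr D_3$: $(B,C,A)$; - $\mathscr D_4$: $(B,A,C)$; - $\mathscr D_5$: $(A,B,C)$. A word $w\in\{A,B,C\}^{\mathbb Z}$ is admissible if, for some $k$, every pair of consecutive letters $w_n\to w_{n+1}$ is an arrow of $\mathscr D_k$. In $w=(w_n)$, the letter $w_n$ is sandwiched if $w_{n-1}=w_{n+1}$. The derived sequence $w'$ of an admissible word $w$ keeps, in order, exactly the sandwiched letters of $w$. The word $w$ is derivable if it is admissible and $w'$ is admissible. The iterated derived sequences are defined by $w^{(0)}=w$ and $w^{(n+1)}=(w^{(n)})'$. The word $w$ is infinitely derivable if $w^{(n)}$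 is derivable for every $n\ge0$. *)

theory Defs
  imports "HOL-Analysis.Analysis"
begin

datatype lbl = A | B | C

definition hex_vertex :: "nat \<Rightarrow> complex" where
  "hex_vertex k = cis (of_nat k * pi / 3)"

text \<open>The sides of E with their labels: A = top and bottom sides, B = upper-right and
  lower-left, C = lower-right and upper-left.\<close>
fun side :: "lbl \<Rightarrow> complex set" where
  "side A = closed_segment (hex_vertex 1) (hex_vertex 2) \<union> closed_segment (hex_vertex 4) (hex_vertex 5)"
| "side B = closed_segment (hex_vertex 0) (hex_vertex 1) \<union> closed_segment (hex_vertex 3) (hex_vertex 4)"
| "side C = closed_segment (hex_vertex 5) (hex_vertex 0) \<union> closed_segment (hex_vertex 2) (hex_vertex 3)"

text \<open>The lattice of translations generated by the side gluings; S_E = plane / hex_lattice,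
  and the translates of E tile the plane.\<close>
definition hex_lattice :: "complex set" where
  "hex_lattice = {of_int m * Complex (3/2) (sqrt 3 / 2) + of_int n * Complex 0 (sqrt 3) | m n. True}"

definition edges :: "lbl \<Rightarrow> complex set" where
  "edges l = (\<Union>u\<in>hex_lattice. (\<lambda>z. z + u) ` side l)"

definition marked_lifts :: "complex set" where
  "marked_lifts = {hex_vertex k + u | k u. k < 6 \<and> u \<in> hex_lattice}"

text \<open>A linear trajectory, lifted to the universal cover: the line t \<mapsto> p + t v, v \<noteq> 0,
  avoiding the marked points.\<close>
definition linear_trajectory :: "complex \<Rightarrow> complex \<Rightarrow> bool" where
  "linear_trajectory p v \<longleftrightarrow> v \<noteq> 0 \<and> (\<forall>t::real. p + of_real t * v \<notin> marked_lifts)"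

definition is_cutting_seq :: "complex \<Rightarrow> complex \<Rightarrow> (int \<Rightarrow> lbl) \<Rightarrow> bool" where
  "is_cutting_seq p v c \<longleftrightarrow>
     (\<exists>\<sigma> :: int \<Rightarrow> real. strict_mono \<sigma> \<and>
        range \<sigma> = {t. \<exists>l. p + of_real t * v \<in> edges l} \<and>
        (\<forall>n. p + of_real (\<sigma> n) * v \<in> edges (c n)))"

definition diag_arrows :: "lbl \<times> lbl \<times> lbl \<Rightarrow> (lbl \<times> lbl) set" where
  "diag_arrows t = (case t of (x, y, z) \<Rightarrow> {(x, y), (y, x), (y, z), (z, y), (z, z)})"

fun trans_diag :: "nat \<Rightarrow> lbl \<times> lbl \<times> lbl" where
  "trans_diag 0 = (A, C, B)"
| "trans_diag (Suc 0) = (C, A, B)"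
| "trans_diag (Suc (Suc 0)) = (C, B, A)"
| "trans_diag (Suc (Suc (Suc 0))) = (B, C, A)"
| "trans_diag (Suc (Suc (Suc (Suc 0)))) = (B, A, C)"
| "trans_diag _ = (A, B, C)"

text \<open>A (possibly finite or one-sided) subsequence of w : int \<Rightarrow> lbl is represented by the set S
  of positions kept, in the order of the integers.  consec S n m: m is the next kept position
  after n.\<close>
definition consec :: "int set \<Rightarrow> int \<Rightarrow> int \<Rightarrow> bool" where
  "consec S n m \<longleftrightarrow> n \<in> S \<and> m \<in> S \<and> n < m \<and> (\<forall>j\<in>S. \<not> (n < j \<and> j < m))"

definition admissible :: "(int \<Rightarrow> lbl) \<Rightarrow> int set \<Rightarrow> bool" where
  "admissible w S \<longleftrightarrow>
     (\<exists>k<6. \<forall>n m. consec S n m \<longrightarrow> (w n, w m) \<in> diag_arrows (trans_diag k))"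

definition sandwiched :: "(int \<Rightarrow> lbl) \<Rightarrow> int set \<Rightarrow> int \<Rightarrow> bool" where
  "sandwiched w S n \<longleftrightarrow> (\<exists>a b. consec S a n \<and> consec S n b \<and> w a = w b)"

definition derived :: "(int \<Rightarrow> lbl) \<Rightarrow> int set \<Rightarrow> int set" where
  "derived w S = {n \<in> S. sandwiched w S n}"

definition derivable :: "(int \<Rightarrow> lbl) \<Rightarrow> int set \<Rightarrow> bool" where
  "derivable w S \<longleftrightarrow> admissible w S \<and> admissible w (derived w S)"

definition infinitely_derivable :: "(int \<Rightarrow> lbl) \<Rightarrow> bool" where
  "infinitely_derivable w \<longleftrightarrow> (\<forall>n. derivable w ((derived w ^^ n) UNIV))"

end

theory Submission
  imports Defs
begin

definition Lt :: "real \<Rightarrow> real \<Rightarrow> real \<Rightarrow> lbl" where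
  "Lt da dg x = (if dg < x then A else if x < -da then C else B)"
definition Tm :: "real \<Rightarrow> real \<Rightarrow> real \<Rightarrow> real" where
  "Tm da dg x = (if dg < x then x - da - 2*dg else if x < -da then x + 2*da + dg else x + da - dg)"
definition gen :: "real \<Rightarrow> real \<Rightarrow> real \<Rightarrow> bool" where
  "gen da dg x \<longleftrightarrow> -(da+dg) < x \<and> x < da+dg \<and> x \<noteq> dg \<and> x \<noteq> -da"

definition hI :: "real \<Rightarrow> real \<Rightarrow> real \<Rightarrow> real" where
  "hI da dg x = (if dg < x then x - 3*da else if x < -da then x + dg - da else x + da - dg)"
definition hII :: "real \<Rightarrow> real \<Rightarrow> real \<Rightarrow> real" where
  "hII da dg x = (if dg < x then x - 3*da else if x < -da then x + dg - da else x)"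
definition hIII :: "real \<Rightarrow> real \<Rightarrow> real \<Rightarrow> real" where
  "hIII da dg x = (if dg < x then x - 3*da else if x < -da then x + 3*da else x)"
definition sigI :: "lbl \<Rightarrow> lbl" where "sigI l = (case l of A \<Rightarrow> A | B \<Rightarrow> C | C \<Rightarrow> B)"
definition sigII :: "lbl \<Rightarrow> lbl" where "sigII l = (case l of A \<Rightarrow> B | B \<Rightarrow> A | C \<Rightarrow> C)"
definition sigIII :: "lbl \<Rightarrow> lbl" where "sigIII l = (case l of A \<Rightarrow> C | B \<Rightarrow> B | C \<Rightarrow> A)"

lemma reg3:
  assumes "gen da dg x" "0 \<le> da" "0 \<le> dg"
  obtains (RA) "dg < x" "x < da+dg" "Lt da dg x = A" "Tm da dg x = x - da - 2*dg"
   | (RC) "-(da+dg) < x" "x < -da" "Lt da dg x = C" "Tm da dg x = x + 2*da + dg"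
   | (RB) "-da < x" "x < dg" "Lt da dg x = B" "Tm da dg x = x + da - dg"
  using assms unfolding gen_def Lt_def Tm_def
  by (smt (verit))

lemma TmA: "dg < x \<Longrightarrow> Tm da dg x = x - da - 2*dg" by (simp add: Tm_def)
lemma TmC: "x < -da \<Longrightarrow> -da \<le> dg \<Longrightarrow> Tm da dg x = x + 2*da + dg" by (simp add: Tm_def)
lemma TmB: "-da \<le> x \<Longrightarrow> x \<le> dg \<Longrightarrow> Tm da dg x = x + da - dg" by (simp add: Tm_def)
lemma LtA: "dg < x \<Longrightarrow> Lt da dg x = A" by (simp add: Lt_def)
lemma LtC: "x < -da \<Longrightarrow> -da \<le> dg \<Longrightarrow> Lt da dg x = C" by (simp add: Lt_def)
lemma LtB: "-da \<le> x \<Longrightarrow> x \<le> dg \<Longrightarrow> Lt da dg x = B" by (simp add: Lt_def)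
lemma gen_intro: "-(da+dg) < x \<Longrightarrow> x < da+dg \<Longrightarrow> x \<noteq> dg \<Longrightarrow> x \<noteq> -da \<Longrightarrow> gen da dg x"
  by (simp add: gen_def)


section \<open>Coordinates\<close>

definition ca :: "complex \<Rightarrow> real" where "ca z = 2 * Im z / sqrt 3"
definition cg :: "complex \<Rightarrow> real" where "cg z = Re z - Im z / sqrt 3"

lemma s3: "sqrt 3 * sqrt 3 = (3::real)" by simp
lemma s3pos: "sqrt 3 > (0::real)" by simp

lemma coord_inv: "Im z = sqrt 3 / 2 * ca z" "Re z = cg z + ca z / 2"
  unfolding ca_def cg_def using s3pos by (auto simp: field_simps)

lemma coord_eq: "z = w \<longleftrightarrow> ca z = ca w \<and> cg z = cg w"
proof
  assume "ca z = ca w \<and> cg z = cg w"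
  then have "Im z = Im w" "Re z = Re w" using coord_inv[of z] coord_inv[of w] by auto
  then show "z = w" by (simp add: complex_eq_iff)
qed simp

lemma ca_add: "ca (z + w) = ca z + ca w" and cg_add: "cg (z + w) = cg z + cg w"
  and ca_diff: "ca (z - w) = ca z - ca w" and cg_diff: "cg (z - w) = cg z - cg w"
  and ca_scale: "ca (of_real t * z) = t * ca z" and cg_scale: "cg (of_real t * z) = t * cg z"
  unfolding ca_def cg_def by (auto simp: field_simps)

lemma hv0: "hex_vertex 0 = Complex 1 0" by (simp add: hex_vertex_def complex_eq_iff)
lemma hv1: "hex_vertex 1 = Complex (1/2) (sqrt 3 / 2)"
  by (simp add: hex_vertex_def complex_eq_iff cos_60 sin_60)
lemma hv2: "hex_vertex 2 = Complex (-1/2) (sqrt 3 / 2)"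
  by (simp add: hex_vertex_def complex_eq_iff cos_120 sin_120)
lemma hv3: "hex_vertex 3 = Complex (-1) 0" by (simp add: hex_vertex_def complex_eq_iff)
lemma hv4: "hex_vertex 4 = Complex (-1/2) (- sqrt 3 / 2)"
proof -
  have e: "pi/3 + pi = (4::real) * pi / 3" by simp
  have c: "cos (4 * pi / 3) = -1/2" using cos_periodic_pi[of "pi/3"] unfolding e cos_60 by simp
  have s: "sin (4 * pi / 3) = - sqrt 3/2" using sin_periodic_pi[of "pi/3"] unfolding e sin_60 by simp
  show ?thesis unfolding hex_vertex_def using c s by (simp add: complex_eq_iff)
qed
lemma hv5: "hex_vertex 5 = Complex (1/2) (- sqrt 3 / 2)"
proof -
  have e: "2*pi/3 + pi = (5::real) * pi / 3" by simp
  have c: "cos (5 * pi / 3) = 1/2" using cos_periodic_pi[of "2*pi/3"] unfolding e cos_120 by simp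
  have s: "sin (5 * pi / 3) = - sqrt 3/2" using sin_periodic_pi[of "2*pi/3"] unfolding e sin_120 by simp
  show ?thesis unfolding hex_vertex_def using c s by (simp add: complex_eq_iff)
qed

lemma cav: "ca (Complex x y) = 2 * y / sqrt 3" "cg (Complex x y) = x - y / sqrt 3"
  by (simp_all add: ca_def cg_def)

lemma vco:
  "ca (hex_vertex 0) = 0" "cg (hex_vertex 0) = 1"
  "ca (hex_vertex 1) = 1" "cg (hex_vertex 1) = 0"
  "ca (hex_vertex 2) = 1" "cg (hex_vertex 2) = -1"
  "ca (hex_vertex 3) = 0" "cg (hex_vertex 3) = -1"
  "ca (hex_vertex 4) = -1" "cg (hex_vertex 4) = 0"
  "ca (hex_vertex 5) = -1" "cg (hex_vertex 5) = 1"
  unfolding hv0 hv1 hv2 hv3 hv4 hv5 cav using s3pos by (auto simp: field_simps)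

lemma seg_ca:
  "z \<in> closed_segment p q \<longleftrightarrow> (\<exists>t. 0 \<le> t \<and> t \<le> 1 \<and> ca z = (1-t)*ca p + t*ca q \<and> cg z = (1-t)*cg p + t*cg q)"
proof -
  have "z \<in> closed_segment p q \<longleftrightarrow> (\<exists>t. 0 \<le> t \<and> t \<le> 1 \<and> z = of_real (1-t) * p + of_real t * q)"
    unfolding closed_segment_def by (auto simp: scaleR_conv_of_real)
  also have "\<dots> \<longleftrightarrow> (\<exists>t. 0 \<le> t \<and> t \<le> 1 \<and> ca z = (1-t)*ca p + t*ca q \<and> cg z = (1-t)*cg p + t*cg q)"
    by (simp add: coord_eq ca_add cg_add ca_scale cg_scale del: of_real_diff)
  finally show ?thesis .
qed

lemma sideA: "s \<in> side A \<longleftrightarrow> (ca s = 1 \<and> -1 \<le> cg s \<and> cg s \<le> 0) \<or> (ca s = -1 \<and> 0 \<le> cg s \<and> cg s \<le> 1)"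
proof -
  have 1: "s \<in> closed_segment (hex_vertex 1) (hex_vertex 2) \<longleftrightarrow> (ca s = 1 \<and> -1 \<le> cg s \<and> cg s \<le> 0)"
    unfolding seg_ca vco by (auto intro!: exI[of _ "- cg s"])
  have 2: "s \<in> closed_segment (hex_vertex 4) (hex_vertex 5) \<longleftrightarrow> (ca s = -1 \<and> 0 \<le> cg s \<and> cg s \<le> 1)"
    unfolding seg_ca vco by (auto intro!: exI[of _ "cg s"])
  show ?thesis using 1 2 by simp
qed

lemma sideB: "s \<in> side B \<longleftrightarrow> (ca s + cg s = 1 \<and> 0 \<le> ca s \<and> ca s \<le> 1) \<or> (ca s + cg s = -1 \<and> -1 \<le> ca s \<and> ca s \<le> 0)"
proof -
  have 1: "s \<in> closed_segment (hex_vertex 0) (hex_vertex 1) \<longleftrightarrow> (ca s + cg s = 1 \<and> 0 \<le> ca s \<and> ca s \<le> 1)"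
    unfolding seg_ca vco by (auto intro!: exI[of _ "ca s"])
  have 2: "s \<in> closed_segment (hex_vertex 3) (hex_vertex 4) \<longleftrightarrow> (ca s + cg s = -1 \<and> -1 \<le> ca s \<and> ca s \<le> 0)"
    unfolding seg_ca vco by (auto intro!: exI[of _ "- ca s"])
  show ?thesis using 1 2 by simp
qed

lemma sideC: "s \<in> side C \<longleftrightarrow> (cg s = 1 \<and> -1 \<le> ca s \<and> ca s \<le> 0) \<or> (cg s = -1 \<and> 0 \<le> ca s \<and> ca s \<le> 1)"
proof -
  have 1: "s \<in> closed_segment (hex_vertex 5) (hex_vertex 0) \<longleftrightarrow> (cg s = 1 \<and> -1 \<le> ca s \<and> ca s \<le> 0)"
    unfolding seg_ca vco by (auto intro!: exI[of _ "ca s + 1"])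
  have 2: "s \<in> closed_segment (hex_vertex 2) (hex_vertex 3) \<longleftrightarrow> (cg s = -1 \<and> 0 \<le> ca s \<and> ca s \<le> 1)"
    unfolding seg_ca vco by (auto intro!: exI[of _ "1 - ca s"])
  show ?thesis using 1 2 by simp
qed

lemma lat_char: "u \<in> hex_lattice \<longleftrightarrow> (\<exists>i j::int. 3 dvd (i - j) \<and> ca u = of_int i \<and> cg u = of_int j)"
proof
  assume "u \<in> hex_lattice"
  then obtain m n :: int where u: "u = of_int m * Complex (3/2) (sqrt 3 / 2) + of_int n * Complex 0 (sqrt 3)"
    unfolding hex_lattice_def by auto
  have "ca u = of_int (m + 2*n)" "cg u = of_int (m - n)"
    unfolding u ca_def cg_def using s3pos by (auto simp: field_simps)
  moreover have "3 dvd ((m + 2*n) - (m - n))" by simp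
  ultimately show "\<exists>i j::int. 3 dvd (i - j) \<and> ca u = of_int i \<and> cg u = of_int j" by blast
next
  assume "\<exists>i j::int. 3 dvd (i - j) \<and> ca u = of_int i \<and> cg u = of_int j"
  then obtain i j :: int where ij: "3 dvd (i - j)" "ca u = of_int i" "cg u = of_int j" by blast
  obtain n where n: "i - j = 3 * n" using ij(1) by blast
  define m where "m = j + n"
  have "u = of_int m * Complex (3/2) (sqrt 3 / 2) + of_int n * Complex 0 (sqrt 3)"
    unfolding coord_eq ij using s3pos n unfolding m_def ca_def cg_def by (auto simp: field_simps)
  then show "u \<in> hex_lattice" unfolding hex_lattice_def by blast
qed

lemma edges_char: "z \<in> edges l \<longleftrightarrow> (\<exists>u\<in>hex_lattice. z - u \<in> side l)"
  unfolding edges_def by (auto simp: image_iff) (metis add_diff_cancel_right', metis diff_add_cancel)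



section \<open>Arithmetic description of the tiling\<close>

fun sd :: "lbl \<Rightarrow> real \<Rightarrow> real \<Rightarrow> bool" where
  "sd A a g = ((a = 1 \<and> -1 \<le> g \<and> g \<le> 0) \<or> (a = -1 \<and> 0 \<le> g \<and> g \<le> 1))"
| "sd B a g = ((a + g = 1 \<and> 0 \<le> a \<and> a \<le> 1) \<or> (a + g = -1 \<and> -1 \<le> a \<and> a \<le> 0))"
| "sd C a g = ((g = 1 \<and> -1 \<le> a \<and> a \<le> 0) \<or> (g = -1 \<and> 0 \<le> a \<and> a \<le> 1))"

definition Ed :: "lbl \<Rightarrow> real \<Rightarrow> real \<Rightarrow> bool" where
  "Ed l a g \<longleftrightarrow> (\<exists>i j::int. 3 dvd (i - j) \<and> sd l (a - of_int i) (g - of_int j))"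

definition MK :: "real \<Rightarrow> real \<Rightarrow> bool" where
  "MK a g \<longleftrightarrow> (\<exists>i j::int. a = of_int i \<and> g = of_int j \<and> \<not> 3 dvd (i - j))"

fun ExR :: "lbl \<Rightarrow> real \<Rightarrow> real \<Rightarrow> int \<Rightarrow> int \<Rightarrow> bool" where
  "ExR A a g i j = (a = of_int i + 1 \<and> of_int j - 1 < g \<and> g < of_int j)"
| "ExR B a g i j = (a + g = of_int i + of_int j + 1 \<and> of_int i < a \<and> a < of_int i + 1)"
| "ExR C a g i j = (g = of_int j + 1 \<and> of_int i - 1 < a \<and> a < of_int i)"

lemma side_sd: "s \<in> side l \<longleftrightarrow> sd l (ca s) (cg s)"
  by (cases l) (simp_all only: sideA sideB sideC sd.simps)

lemma ex_coord: "\<exists>u. ca u = x \<and> cg u = y"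
  by (rule exI[of _ "Complex (y + x/2) (sqrt 3 / 2 * x)"]) (simp add: cav)

lemma edges_Ed: "z \<in> edges l \<longleftrightarrow> Ed l (ca z) (cg z)"
proof
  assume "z \<in> edges l"
  then obtain u where u: "u \<in> hex_lattice" "z - u \<in> side l" using edges_char by blast
  obtain i j where ij: "3 dvd (i - j)" "ca u = of_int i" "cg u = of_int j" using u(1) lat_char by blast
  show "Ed l (ca z) (cg z)" unfolding Ed_def using u(2) ij side_sd[of "z - u"] by (auto simp: ca_diff cg_diff)
next
  assume "Ed l (ca z) (cg z)"
  then obtain i j :: int where ij: "3 dvd (i - j)" "sd l (ca z - of_int i) (cg z - of_int j)" unfolding Ed_def by blast
  obtain u where u: "ca u = of_int i" "cg u = of_int j" using ex_coord by blast
  have "u \<in> hex_lattice" using lat_char ij u by blast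
  moreover have "z - u \<in> side l" using side_sd[of "z - u"] ij u by (simp add: ca_diff cg_diff)
  ultimately show "z \<in> edges l" using edges_char by blast
qed

lemma marked_MK: "MK (ca z) (cg z) \<Longrightarrow> z \<in> marked_lifts"
proof -
  assume "MK (ca z) (cg z)"
  then obtain i j :: int where ij: "ca z = of_int i" "cg z = of_int j" "\<not> 3 dvd (i - j)" unfolding MK_def by blast
  show "z \<in> marked_lifts"
  proof (cases "3 dvd (i - 1 - j)")
    case True
    obtain u where u: "ca u = of_int (i - 1)" "cg u = of_int j" using ex_coord by blast
    have uL: "u \<in> hex_lattice" using lat_char u True by blast
    have "z = hex_vertex 1 + u" unfolding coord_eq using ij u vco by (simp add: ca_add cg_add)
    then show ?thesis unfolding marked_lifts_def using uL by (intro CollectI exI[of _ 1] exI[of _ u]) auto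
  next
    case False
    then have d: "3 dvd (i - (j - 1))" using ij(3) by presburger
    obtain u where u: "ca u = of_int i" "cg u = of_int (j - 1)" using ex_coord by blast
    have uL: "u \<in> hex_lattice" using lat_char u d by blast
    have "z = hex_vertex 0 + u" unfolding coord_eq using ij u vco by (simp add: ca_add cg_add)
    then show ?thesis unfolding marked_lifts_def using uL by (intro CollectI exI[of _ 0] exI[of _ u]) auto
  qed
qed

lemma mk_intro: "a = of_int x \<Longrightarrow> g = of_int y \<Longrightarrow> \<not> 3 dvd (x - y) \<Longrightarrow> MK a g"
  unfolding MK_def by blast

lemma Ex_Ed: "3 dvd (i - j) \<Longrightarrow> ExR l a g i j \<Longrightarrow> Ed l a g"
  unfolding Ed_def by (rule exI[of _ i], rule exI[of _ j]) (cases l; auto)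



lemma nmk: "\<not> MK a g \<Longrightarrow> a = of_int x \<Longrightarrow> g = of_int y \<Longrightarrow> 3 dvd (x - y)"
  using mk_intro by blast

lemma exit_ex:
  assumes E: "Ed l a g" and nm: "\<not> MK a g"
  shows "\<exists>i j. 3 dvd (i - j) \<and> ExR l a g i j"
proof -
  obtain i j :: int where dv: "3 dvd (i - j)" and s: "sd l (a - of_int i) (g - of_int j)"
    using E unfolding Ed_def by blast
  show ?thesis
  proof (cases l)
    case A
    then have s': "(a = of_int i + 1 \<and> of_int j - 1 \<le> g \<and> g \<le> of_int j) \<or> (a = of_int i - 1 \<and> of_int j \<le> g \<and> g \<le> of_int j + 1)"
      using s by auto
    then show ?thesis
    proof
      assume h: "a = of_int i + 1 \<and> of_int j - 1 \<le> g \<and> g \<le> of_int j"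
      have n1: "g \<noteq> of_int j - 1"
      proof
        assume e: "g = of_int j - 1"
        have "3 dvd ((i+1) - (j-1))" by (rule nmk[OF nm]) (use e h in simp)+
        then show False using dv by presburger
      qed
      have n2: "g \<noteq> of_int j"
      proof
        assume e: "g = of_int j"
        have "3 dvd ((i+1) - j)" by (rule nmk[OF nm]) (use e h in simp)+
        then show False using dv by presburger
      qed
      show ?thesis using h n1 n2 dv A by (intro exI[of _ i] exI[of _ j]) auto
    next
      assume h: "a = of_int i - 1 \<and> of_int j \<le> g \<and> g \<le> of_int j + 1"
      have n1: "g \<noteq> of_int j"
      proof
        assume e: "g = of_int j"
        have "3 dvd ((i-1) - j)" by (rule nmk[OF nm]) (use e h in simp)+
        then show False using dv by presburger
      qed
      have n2: "g \<noteq> of_int j + 1"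
      proof
        assume e: "g = of_int j + 1"
        have "3 dvd ((i-1) - (j+1))" by (rule nmk[OF nm]) (use e h in simp)+
        then show False using dv by presburger
      qed
      have dv2: "3 dvd ((i - 2) - (j + 1))" using dv by presburger
      show ?thesis using h n1 n2 dv2 A by (intro exI[of _ "i - 2"] exI[of _ "j + 1"]) auto
    qed
  next
    case B
    then have s': "(a + g = of_int i + of_int j + 1 \<and> of_int i \<le> a \<and> a \<le> of_int i + 1) \<or>
                   (a + g = of_int i + of_int j - 1 \<and> of_int i - 1 \<le> a \<and> a \<le> of_int i)"
      using s by auto
    then show ?thesis
    proof
      assume h: "a + g = of_int i + of_int j + 1 \<and> of_int i \<le> a \<and> a \<le> of_int i + 1"
      have n1: "a \<noteq> of_int i"
      proof
        assume e: "a = of_int i"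
        have "3 dvd (i - (j+1))" by (rule nmk[OF nm]) (use e h in simp)+
        then show False using dv by presburger
      qed
      have n2: "a \<noteq> of_int i + 1"
      proof
        assume e: "a = of_int i + 1"
        have "3 dvd ((i+1) - j)" by (rule nmk[OF nm]) (use e h in simp)+
        then show False using dv by presburger
      qed
      show ?thesis using h n1 n2 dv B by (intro exI[of _ i] exI[of _ j]) auto
    next
      assume h: "a + g = of_int i + of_int j - 1 \<and> of_int i - 1 \<le> a \<and> a \<le> of_int i"
      have n1: "a \<noteq> of_int i - 1"
      proof
        assume e: "a = of_int i - 1"
        have "3 dvd ((i-1) - j)" by (rule nmk[OF nm]) (use e h in simp)+
        then show False using dv by presburger
      qed
      have n2: "a \<noteq> of_int i"
      proof
        assume e: "a = of_int i"
        have "3 dvd (i - (j - 1))" by (rule nmk[OF nm]) (use e h in simp)+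
        then show False using dv by presburger
      qed
      have dv2: "3 dvd ((i - 1) - (j - 1))" using dv by presburger
      show ?thesis using h n1 n2 dv2 B by (intro exI[of _ "i - 1"] exI[of _ "j - 1"]) auto
    qed
  next
    case C
    then have s': "(g = of_int j + 1 \<and> of_int i - 1 \<le> a \<and> a \<le> of_int i) \<or>
                   (g = of_int j - 1 \<and> of_int i \<le> a \<and> a \<le> of_int i + 1)"
      using s by auto
    then show ?thesis
    proof
      assume h: "g = of_int j + 1 \<and> of_int i - 1 \<le> a \<and> a \<le> of_int i"
      have n1: "a \<noteq> of_int i - 1"
      proof
        assume e: "a = of_int i - 1"
        have "3 dvd ((i-1) - (j+1))" by (rule nmk[OF nm]) (use e h in simp)+
        then show False using dv by presburger
      qed
      have n2: "a \<noteq> of_int i"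
      proof
        assume e: "a = of_int i"
        have "3 dvd (i - (j+1))" by (rule nmk[OF nm]) (use e h in simp)+
        then show False using dv by presburger
      qed
      show ?thesis using h n1 n2 dv C by (intro exI[of _ i] exI[of _ j]) auto
    next
      assume h: "g = of_int j - 1 \<and> of_int i \<le> a \<and> a \<le> of_int i + 1"
      have n1: "a \<noteq> of_int i"
      proof
        assume e: "a = of_int i"
        have "3 dvd (i - (j-1))" by (rule nmk[OF nm]) (use e h in simp)+
        then show False using dv by presburger
      qed
      have n2: "a \<noteq> of_int i + 1"
      proof
        assume e: "a = of_int i + 1"
        have "3 dvd ((i+1) - (j-1))" by (rule nmk[OF nm]) (use e h in simp)+
        then show False using dv by presburger
      qed
      have dv2: "3 dvd ((i + 1) - (j - 2))" using dv by presburger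
      show ?thesis using h n1 n2 dv2 C by (intro exI[of _ "i + 1"] exI[of _ "j - 2"]) auto
    qed
  qed
qed

lemma int_strict: "(of_int m :: real) < x \<Longrightarrow> x < of_int m + 1 \<Longrightarrow> x \<noteq> of_int k"
  by (smt (verit) of_int_less_iff of_int_add of_int_1)

lemma exit_label:
  assumes X: "ExR l a g i j" and E: "Ed l' a g"
  shows "l' = l"
proof -
  obtain i' j' :: int where s: "sd l' (a - of_int i') (g - of_int j')" using E unfolding Ed_def by blast
  show ?thesis
  proof (cases l)
    case A
    then have x: "a = of_int i + 1" "of_int (j - 1) < g" "g < of_int (j - 1) + 1" using X by auto
    show ?thesis
    proof (cases l')
      case B
      then have "g = of_int (i' + j' + 1 - (i + 1)) \<or> g = of_int (i' + j' - 1 - (i + 1))" using s x(1) by auto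
      then show ?thesis using int_strict[OF x(2,3)] by blast
    next
      case C
      then have "g = of_int (j' + 1) \<or> g = of_int (j' - 1)" using s by auto
      then show ?thesis using int_strict[OF x(2,3)] by blast
    qed (use A in simp)
  next
    case B
    then have x: "a + g = of_int (i + j + 1)" "of_int i < a" "a < of_int i + 1" using X by auto
    show ?thesis
    proof (cases l')
      case A
      then have "a = of_int (i' + 1) \<or> a = of_int (i' - 1)" using s by auto
      then show ?thesis using int_strict[OF x(2,3)] by blast
    next
      case C
      then have "a = of_int (i + j + 1 - (j' + 1)) \<or> a = of_int (i + j + 1 - (j' - 1))" using s x(1) by (auto simp: algebra_simps)
      then show ?thesis using int_strict[OF x(2,3)] by blast
    qed (use B in simp)
  next
    case C
    then have x: "g = of_int (j + 1)" "of_int (i - 1) < a" "a < of_int (i - 1) + 1" using X by auto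
    show ?thesis
    proof (cases l')
      case A
      then have "a = of_int (i' + 1) \<or> a = of_int (i' - 1)" using s by auto
      then show ?thesis using int_strict[OF x(2,3)] by blast
    next
      case B
      then have "a = of_int (i' + j' + 1 - (j + 1)) \<or> a = of_int (i' + j' - 1 - (j + 1))" using s x(1) by (auto simp: algebra_simps)
      then show ?thesis using int_strict[OF x(2,3)] by blast
    qed (use C in simp)
  qed
qed

lemma exit_uniq:
  assumes "ExR l a g i j" "ExR l a g i' j'"
  shows "i = i' \<and> j = j'"
  using assms by (cases l; simp; smt (verit) of_int_less_iff of_int_add of_int_1 of_int_eq_iff)

lemma int_le_of: "(of_int x :: real) < of_int y + 1 \<Longrightarrow> x \<le> y"
  by (smt (verit) of_int_less_iff of_int_add of_int_1)

lemma open_hex_noedge: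
  assumes dv: "3 dvd (i - j)" and h: "\<bar>a - of_int i\<bar> < 1" "\<bar>g - of_int j\<bar> < 1" "\<bar>a + g - of_int i - of_int j\<bar> < 1"
  shows "\<not> Ed l a g"
proof
  assume "Ed l a g"
  then obtain i' j' :: int where dv': "3 dvd (i' - j')" and s: "sd l (a - of_int i') (g - of_int j')"
    unfolding Ed_def by blast
  have h1: "of_int i - 1 < a" "a < of_int i + 1" "of_int j - 1 < g" "g < of_int j + 1"
    "of_int i + of_int j - 1 < a + g" "a + g < of_int i + of_int j + 1" using h by auto
  show False
  proof (cases l)
    case A
    then consider "a = of_int i' + 1" "of_int j' - 1 \<le> g" "g \<le> of_int j'" | "a = of_int i' - 1" "of_int j' \<le> g" "g \<le> of_int j' + 1"
      using s by auto
    then show False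
    proof cases
      case 1
      have "i' + 1 \<le> i" by (rule int_le_of) (use 1 h1 in simp)
      moreover have "i \<le> i' + 1" by (rule int_le_of) (use 1 h1 in simp)
      moreover have "j \<le> j'" by (rule int_le_of) (use 1 h1 in linarith)
      moreover have "j' \<le> j + 1" by (rule int_le_of) (use 1 h1 in simp)
      ultimately show False using dv dv' by presburger
    next
      case 2
      have "i' \<le> i + 1" by (rule int_le_of) (use 2 h1 in simp)
      moreover have "i + 1 \<le> i'" by (rule int_le_of) (use 2 h1 in simp)
      moreover have "j - 1 \<le> j'" by (rule int_le_of) (use 2 h1 in simp)
      moreover have "j' \<le> j" by (rule int_le_of) (use 2 h1 in linarith)
      ultimately show False using dv dv' by presburger
    qed
  next
    case B
    then consider "a + g = of_int i' + of_int j' + 1" "of_int i' \<le> a" "a \<le> of_int i' + 1" | "a + g = of_int i' + of_int j' - 1" "of_int i' - 1 \<le> a" "a \<le> of_int i'"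
      using s by auto
    then show False
    proof cases
      case 1
      have "i' + j' + 1 \<le> i + j" by (rule int_le_of) (use 1 h1 in simp)
      moreover have "i + j \<le> i' + j' + 1" by (rule int_le_of) (use 1 h1 in simp)
      moreover have "i - 1 \<le> i'" by (rule int_le_of) (use 1 h1 in simp)
      moreover have "i' \<le> i" by (rule int_le_of) (use 1 h1 in linarith)
      ultimately show False using dv dv' by presburger
    next
      case 2
      have "i' + j' \<le> i + j + 1" by (rule int_le_of) (use 2 h1 in simp)
      moreover have "i + j + 1 \<le> i' + j'" by (rule int_le_of) (use 2 h1 in simp)
      moreover have "i \<le> i'" by (rule int_le_of) (use 2 h1 in linarith)
      moreover have "i' \<le> i + 1" by (rule int_le_of) (use 2 h1 in simp)
      ultimately show False using dv dv' by presburger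
    qed
  next
    case C
    then consider "g = of_int j' + 1" "of_int i' - 1 \<le> a" "a \<le> of_int i'" | "g = of_int j' - 1" "of_int i' \<le> a" "a \<le> of_int i' + 1"
      using s by auto
    then show False
    proof cases
      case 1
      have "j' + 1 \<le> j" by (rule int_le_of) (use 1 h1 in simp)
      moreover have "j \<le> j' + 1" by (rule int_le_of) (use 1 h1 in simp)
      moreover have "i \<le> i'" by (rule int_le_of) (use 1 h1 in linarith)
      moreover have "i' \<le> i + 1" by (rule int_le_of) (use 1 h1 in simp)
      ultimately show False using dv dv' by presburger
    next
      case 2
      have "j' \<le> j + 1" by (rule int_le_of) (use 2 h1 in simp)
      moreover have "j + 1 \<le> j'" by (rule int_le_of) (use 2 h1 in simp)
      moreover have "i - 1 \<le> i'" by (rule int_le_of) (use 2 h1 in simp)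
      moreover have "i' \<le> i" by (rule int_le_of) (use 2 h1 in linarith)
      ultimately show False using dv dv' by presburger
    qed
  qed
qed



section \<open>Dynamics of a line in the tiling\<close>

lemma exit_y:
  assumes X: "ExR l a g i j" and d: "0 \<le> da" "0 \<le> dg" "0 < da + dg"
    and pA: "l = A \<Longrightarrow> 0 < da" and pC: "l = C \<Longrightarrow> 0 < dg"
  shows "gen da dg (dg*(a - of_int i) - da*(g - of_int j)) \<and> Lt da dg (dg*(a - of_int i) - da*(g - of_int j)) = l"
proof (cases l)
  case A
  then have x: "a - of_int i = 1" "-1 < g - of_int j" "g - of_int j < 0" and da: "0 < da" using X pA by auto
  have p1: "da * (g - of_int j) < 0" using da x by (simp add: mult_pos_neg)
  have p2: "0 < da * (g - of_int j + 1)" using da x by simp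
  have "dg < dg*(a - of_int i) - da*(g - of_int j)" "dg*(a - of_int i) - da*(g - of_int j) < da + dg"
    using p1 p2 x by (auto simp: algebra_simps)
  then show ?thesis using A d unfolding gen_def Lt_def by auto
next
  case B
  then have x: "g - of_int j = 1 - (a - of_int i)" "0 < a - of_int i" "a - of_int i < 1" using X by auto
  define al where "al = a - of_int i"
  have gj: "g - of_int j = 1 - al" using x(1) unfolding al_def .
  have e: "dg*(a - of_int i) - da*(g - of_int j) = al * (da + dg) - da"
    unfolding gj al_def[symmetric] by (simp add: algebra_simps)
  have p1: "0 < al * (da + dg)" using x d unfolding al_def by simp
  have p2: "0 < (1 - al) * (da + dg)" using x d unfolding al_def by simp
  have "-da < al * (da + dg) - da" "al * (da + dg) - da < dg" using p1 p2 by (auto simp: algebra_simps)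
  then show ?thesis using B d unfolding e gen_def Lt_def by auto
next
  case C
  then have x: "g - of_int j = 1" "-1 < a - of_int i" "a - of_int i < 0" and dg: "0 < dg" using X pC by auto
  have p1: "dg * (a - of_int i) < 0" using dg x by (simp add: mult_pos_neg)
  have p2: "0 < dg * (a - of_int i + 1)" using dg x by simp
  have "dg*(a - of_int i) - da*(g - of_int j) < - da" "-(da + dg) < dg*(a - of_int i) - da*(g - of_int j)"
    using p1 p2 x by (auto simp: algebra_simps)
  then show ?thesis using C d unfolding gen_def Lt_def by auto
qed

fun stp :: "lbl \<Rightarrow> int \<times> int" where
  "stp A = (2, -1)" | "stp B = (1, 1)" | "stp C = (-1, 2)"

lemma exit_init:
  assumes X: "ExR l a g i j" and pA: "l = A \<Longrightarrow> 0 < da" and pC: "l = C \<Longrightarrow> 0 < dg"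
  defines "i2 \<equiv> i + fst (stp l)" and "j2 \<equiv> j + snd (stp l)"
  shows "-1 \<le> a - of_int i2" "a - of_int i2 < 1" "-1 \<le> g - of_int j2" "g - of_int j2 < 1"
    "-1 \<le> (a - of_int i2) + (g - of_int j2)" "(a - of_int i2) + (g - of_int j2) < 1"
    "a - of_int i2 = -1 \<Longrightarrow> 0 < da" "g - of_int j2 = -1 \<Longrightarrow> 0 < dg"
  using X pA pC unfolding i2_def j2_def by (cases l; auto)+

lemma up_lt: "0 < d \<Longrightarrow> s < (1 - u0)/d \<Longrightarrow> u0 + s*d < (1::real)"
  by (simp add: pos_less_divide_eq algebra_simps)
lemma up_le: "0 < d \<Longrightarrow> s \<le> (1 - u0)/d \<Longrightarrow> u0 + s*d \<le> (1::real)"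
  by (simp add: pos_le_divide_eq algebra_simps)
lemma up_eq: "0 < d \<Longrightarrow> u0 + ((1 - u0)/d)*d = (1::real)"
  by simp
lemma low_lt: "0 \<le> d \<Longrightarrow> 0 < s \<Longrightarrow> -1 \<le> u0 \<Longrightarrow> (u0 = -1 \<Longrightarrow> 0 < d) \<Longrightarrow> -1 < u0 + s*(d::real)"
proof -
  assume h: "0 \<le> d" "0 < s" "-1 \<le> u0" "u0 = -1 \<Longrightarrow> 0 < d"
  show ?thesis
  proof (cases "u0 = -1")
    case True then have "0 < s*d" using h by simp
    then show ?thesis using True by simp
  next
    case False then have "-1 < u0" using h by simp
    moreover have "0 \<le> s*d" using h by simp
    ultimately show ?thesis by simp
  qed
qed

lemma exit_step:
  assumes nm: "\<forall>t. \<not> MK (a0 + t*da) (g0 + t*dg)" and d: "0 \<le> da" "0 \<le> dg" "0 < da + dg"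
    and lat: "3 dvd (i - j)"
    and b: "-1 \<le> a0 + t0*da - of_int i" "a0 + t0*da - of_int i < 1"
      "-1 \<le> g0 + t0*dg - of_int j" "g0 + t0*dg - of_int j < 1"
      "-1 \<le> (a0 + t0*da - of_int i) + (g0 + t0*dg - of_int j)" "(a0 + t0*da - of_int i) + (g0 + t0*dg - of_int j) < 1"
      "a0 + t0*da - of_int i = -1 \<Longrightarrow> 0 < da" "g0 + t0*dg - of_int j = -1 \<Longrightarrow> 0 < dg"
  shows "\<exists>t1>t0. (\<forall>t. t0 < t \<longrightarrow> t < t1 \<longrightarrow> (\<forall>l. \<not> Ed l (a0 + t*da) (g0 + t*dg))) \<and>
            (\<exists>l'. ExR l' (a0 + t1*da) (g0 + t1*dg) i j)"
proof -
  define ua where "ua = a0 + t0*da - of_int i"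
  define ug where "ug = g0 + t0*dg - of_int j"
  have ea: "\<And>t. a0 + t*da - of_int i = ua + (t - t0)*da" unfolding ua_def by (simp add: algebra_simps)
  have eg: "\<And>t. g0 + t*dg - of_int j = ug + (t - t0)*dg" unfolding ug_def by (simp add: algebra_simps)
  have eb: "\<And>t. (a0 + t*da - of_int i) + (g0 + t*dg - of_int j) = (ua + ug) + (t - t0)*(da + dg)"
    unfolding ua_def ug_def by (simp add: algebra_simps)
  note b' = b[folded ua_def ug_def]
  define sb where "sb = (1 - (ua + ug)) / (da + dg)"
  define sa where "sa = (if 0 < da then (1 - ua)/da else sb)"
  define sg where "sg = (if 0 < dg then (1 - ug)/dg else sb)"
  define s1 where "s1 = min sb (min sa sg)"
  have sbp: "0 < sb" unfolding sb_def using b' d by simp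
  have sap: "0 < sa" unfolding sa_def using b' sbp by simp
  have sgp: "0 < sg" unfolding sg_def using b' sbp by simp
  have s1p: "0 < s1" unfolding s1_def using sbp sap sgp by simp
  have ua_up: "ua + s*da < 1" if "s < s1" for s
  proof (cases "0 < da")
    case True then have "s < (1 - ua)/da" using that unfolding s1_def sa_def by simp
    then show ?thesis using up_lt True by blast
  next
    case False then have "da = 0" using d by simp
    then show ?thesis using b' by simp
  qed
  have ug_up: "ug + s*dg < 1" if "s < s1" for s
  proof (cases "0 < dg")
    case True then have "s < (1 - ug)/dg" using that unfolding s1_def sg_def by simp
    then show ?thesis using up_lt True by blast
  next
    case False then have "dg = 0" using d by simp
    then show ?thesis using b' by simp
  qed
  have ub_up: "(ua + ug) + s*(da+dg) < 1" if "s < s1" for s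
    using that up_lt[of "da+dg" s "ua+ug"] d unfolding s1_def sb_def by simp
  have ua_le: "ua + s1*da \<le> 1"
  proof (cases "0 < da")
    case True then have "s1 \<le> (1 - ua)/da" unfolding s1_def sa_def by simp
    then show ?thesis using up_le True by blast
  next
    case False then have "da = 0" using d by simp
    then show ?thesis using b' by simp
  qed
  have ug_le: "ug + s1*dg \<le> 1"
  proof (cases "0 < dg")
    case True then have "s1 \<le> (1 - ug)/dg" unfolding s1_def sg_def by simp
    then show ?thesis using up_le True by blast
  next
    case False then have "dg = 0" using d by simp
    then show ?thesis using b' by simp
  qed
  have ub_le: "(ua + ug) + s1*(da+dg) \<le> 1"
    using up_le[of "da+dg" s1 "ua+ug"] d unfolding s1_def sb_def by simp
  have lows: "-1 < ua + s*da" "-1 < ug + s*dg" "-1 < (ua + ug) + s*(da+dg)" if "0 < s" for s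
    using low_lt[of da s ua] low_lt[of dg s ug] low_lt[of "da+dg" s "ua+ug"] that d b' by auto
  have one: "ua + s1*da = 1 \<or> ug + s1*dg = 1 \<or> (ua + ug) + s1*(da+dg) = 1"
  proof -
    have "s1 = sb \<or> s1 = sa \<or> s1 = sg" unfolding s1_def by linarith
    moreover have "s1 = sb \<Longrightarrow> (ua + ug) + s1*(da+dg) = 1" unfolding sb_def using d by simp
    moreover have "s1 = sa \<Longrightarrow> ua + s1*da = 1 \<or> (ua + ug) + s1*(da+dg) = 1"
      unfolding sa_def sb_def using d by (cases "0 < da") auto
    moreover have "s1 = sg \<Longrightarrow> ug + s1*dg = 1 \<or> (ua + ug) + s1*(da+dg) = 1"
      unfolding sg_def sb_def using d by (cases "0 < dg") auto
    ultimately show ?thesis by blast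
  qed
  define t1 where "t1 = t0 + s1"
  have t1e: "t1 - t0 = s1" unfolding t1_def by simp
  show ?thesis
  proof (intro exI[of _ t1] conjI allI impI)
    show "t0 < t1" unfolding t1_def using s1p by simp
  next
    fix t l assume t: "t0 < t" "t < t1"
    have "\<bar>a0 + t*da - of_int i\<bar> < 1" "\<bar>g0 + t*dg - of_int j\<bar> < 1"
         "\<bar>(a0 + t*da) + (g0 + t*dg) - of_int i - of_int j\<bar> < 1"
      using ua_up[of "t - t0"] ug_up[of "t - t0"] ub_up[of "t - t0"] lows[of "t - t0"] t ea[of t] eg[of t] eb[of t]
      unfolding t1_def by (auto simp: abs_less_iff algebra_simps)
    then show "\<not> Ed l (a0 + t*da) (g0 + t*dg)" using open_hex_noedge[OF lat] by blast
  next
    let ?a = "a0 + t1*da" and ?g = "g0 + t1*dg"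
    have va: "?a - of_int i = ua + s1*da" using ea[of t1] t1e by simp
    have vg: "?g - of_int j = ug + s1*dg" using eg[of t1] t1e by simp
    have lo: "-1 < ?a - of_int i" "-1 < ?g - of_int j" "-1 < (?a - of_int i) + (?g - of_int j)"
      using lows[OF s1p] va vg by (auto simp: algebra_simps)
    have up: "?a - of_int i \<le> 1" "?g - of_int j \<le> 1" "(?a - of_int i) + (?g - of_int j) \<le> 1"
      using ua_le ug_le ub_le va vg by (auto simp: algebra_simps)
    have on: "?a - of_int i = 1 \<or> ?g - of_int j = 1 \<or> (?a - of_int i) + (?g - of_int j) = 1"
      using one va vg by (auto simp: algebra_simps)
    have nmk1: "\<not> MK ?a ?g" using nm by blast
    show "\<exists>l'. ExR l' ?a ?g i j"
    proof (cases "?a - of_int i = 1")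
      case True
      have "?g \<noteq> of_int j"
      proof
        assume e: "?g = of_int j"
        have "3 dvd ((i+1) - j)" by (rule nmk[OF nmk1]) (use e True in simp)+
        then show False using lat by presburger
      qed
      then have "ExR A ?a ?g i j" using True lo up by auto
      then show ?thesis by blast
    next
      case F1: False
      show ?thesis
      proof (cases "?g - of_int j = 1")
        case True
        have "?a \<noteq> of_int i"
        proof
          assume e: "?a = of_int i"
          have "3 dvd (i - (j + 1))" by (rule nmk[OF nmk1]) (use e True in simp)+
          then show False using lat by presburger
        qed
        then have "ExR C ?a ?g i j" using True lo up by auto
        then show ?thesis by blast
      next
        case False
        then have "ExR B ?a ?g i j" using F1 on lo up by auto
        then show ?thesis by blast
      qed
    qed
  qed
qed


lemma K1_I:
  fixes da dg xp x0 x1 x2 x3 x4 x5 x6 :: real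
  assumes H: "0 \<le> da" "3*da \<le> dg"
    and G: "gen da dg xp" "gen da dg x0" "gen da dg x1" "gen da dg x2" "gen da dg x3" "gen da dg x4" "gen da dg x5" "gen da dg x6"
    and E: "x0 = Tm da dg xp" "x1 = Tm da dg x0" "x2 = Tm da dg x1" "x3 = Tm da dg x2" "x4 = Tm da dg x3" "x5 = Tm da dg x4" "x6 = Tm da dg x5"
    and K: "Lt da dg xp = Lt da dg x1"
  shows "(Lt da dg x0 = Lt da dg x2 \<and> hI da dg x1 = Tm da (dg - 3*da) (hI da dg x0)) \<or> (Lt da dg x0 \<noteq> Lt da dg x2 \<and> Lt da dg x1 = Lt da dg x3 \<and> hI da dg x2 = Tm da (dg - 3*da) (hI da dg x0)) \<or> (Lt da dg x0 \<noteq> Lt da dg x2 \<and> Lt da dg x1 \<noteq> Lt da dg x3 \<and> Lt da dg x2 = Lt da dg x4 \<and> hI da dg x3 = Tm da (dg - 3*da) (hI da dg x0)) \<or> (Lt da dg x0 \<noteq> Lt da dg x2 \<and> Lt da dg x1 \<noteq> Lt da dg x3 \<and> Lt da dg x2 \<noteq> Lt da dg x4 \<and> Lt da dg x3 = Lt da dg x5 \<and> hI da dg x4 = Tm da (dg - 3*da) (hI da dg x0)) \<or> (Lt da dg x0 \<noteq> Lt da dg x2 \<and> Lt da dg x1 \<noteq> Lt da dg x3 \<and> Lt da dg x2 \<noteq> Lt da dg x4 \<and> Lt da dg x3 \<noteq> Lt da dg x5 \<and> Lt da dg x4 = Lt da dg x6 \<and> hI da dg x5 = Tm da (dg - 3*da)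 (hI da dg x0))"
proof -
  have dg0: "0 \<le> dg" using H by linarith
  show ?thesis
  proof (cases rule: reg3[OF G(1) H(1) dg0])
    case 1 note r0 = this
    show ?thesis
    proof (cases rule: reg3[OF G(2) H(1) dg0])
      case 1 note r1 = this
      have False using H E r0 r1 by linarith
      then show ?thesis by simp
    next
      case 2 note r1 = this
      show ?thesis
      proof (cases rule: reg3[OF G(3) H(1) dg0])
        case 1 note r2 = this
        have False using H E r0 r1 r2 by linarith
        then show ?thesis by simp
      next
        case 2 note r2 = this
        have False using H E r0 r1 r2 by linarith
        then show ?thesis by simp
      next
        case 3 note r2 = this
        show ?thesis using K r0 r1 r2 by simp
      qed
    next
      case 3 note r1 = this
      have False using H E r0 r1 by linarith
      then show ?thesis by simp
    qed
  next
    case 2 note r0 = this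
    show ?thesis
    proof (cases rule: reg3[OF G(2) H(1) dg0])
      case 1 note r1 = this
      show ?thesis
      proof (cases rule: reg3[OF G(3) H(1) dg0])
        case 1 note r2 = this
        have False using H E r0 r1 r2 by linarith
        then show ?thesis by simp
      next
        case 2 note r2 = this
        show ?thesis
        proof (cases rule: reg3[OF G(4) H(1) dg0])
          case 1 note r3 = this
          have False using H E r0 r1 r2 r3 by linarith
          then show ?thesis by simp
        next
          case 2 note r3 = this
          have False using H E r0 r1 r2 r3 by linarith
          then show ?thesis by simp
        next
          case 3 note r3 = this
          show ?thesis
          proof (cases rule: reg3[OF G(5) H(1) dg0])
            case 1 note r4 = this
            have False using H E r0 r1 r2 r3 r4 by linarith
            then show ?thesis by simp
          next
            case 2 note r4 = this
            have hv0: "hI da dg x0 = x0 - 3*da" using r1 H by (auto simp: hI_def)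
            have hvj: "hI da dg x2 = x2 + da - dg" using r3 H by (auto simp: hI_def)
            have tm: "Tm da (dg - 3*da) (x0 - 3*da) = (x0 - 3*da) - da - 2*(dg - 3*da)" by (rule TmA; use r0 r1 r2 r3 r4 H E in linarith)
            have eq: "hI da dg x2 = Tm da (dg - 3*da) (hI da dg x0)" unfolding hv0 hvj tm using H E r0 r1 r2 r3 r4 by argo
            show ?thesis using eq r0 r1 r2 r3 r4 by simp
          next
            case 3 note r4 = this
            show ?thesis
            proof (cases rule: reg3[OF G(6) H(1) dg0])
              case 1 note r5 = this
              have False using H E r0 r1 r2 r3 r4 r5 by linarith
              then show ?thesis by simp
            next
              case 2 note r5 = this
              show ?thesis
              proof (cases rule: reg3[OF G(7) H(1) dg0])
                case 1 note r6 = this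
                have False using H E r0 r1 r2 r3 r4 r5 r6 by linarith
                then show ?thesis by simp
              next
                case 2 note r6 = this
                have False using H E r0 r1 r2 r3 r4 r5 r6 by linarith
                then show ?thesis by simp
              next
                case 3 note r6 = this
                have hv0: "hI da dg x0 = x0 - 3*da" using r1 H by (auto simp: hI_def)
                have hvj: "hI da dg x4 = x4 + dg - da" using r5 H by (auto simp: hI_def)
                have tm: "Tm da (dg - 3*da) (x0 - 3*da) = (x0 - 3*da) - da - 2*(dg - 3*da)" by (rule TmA; use r0 r1 r2 r3 r4 r5 r6 H E in linarith)
                have eq: "hI da dg x4 = Tm da (dg - 3*da) (hI da dg x0)" unfolding hv0 hvj tm using H E r0 r1 r2 r3 r4 r5 r6 by argo
                show ?thesis using eq r0 r1 r2 r3 r4 r5 r6 by simp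
              qed
            next
              case 3 note r5 = this
              have False using H E r0 r1 r2 r3 r4 r5 by linarith
              then show ?thesis by simp
            qed
          qed
        qed
      next
        case 3 note r2 = this
        have False using H E r0 r1 r2 by linarith
        then show ?thesis by simp
      qed
    next
      case 2 note r1 = this
      have False using H E r0 r1 by linarith
      then show ?thesis by simp
    next
      case 3 note r1 = this
      show ?thesis
      proof (cases rule: reg3[OF G(3) H(1) dg0])
        case 1 note r2 = this
        have False using H E r0 r1 r2 by linarith
        then show ?thesis by simp
      next
        case 2 note r2 = this
        show ?thesis
        proof (cases rule: reg3[OF G(4) H(1) dg0])
          case 1 note r3 = this
          show ?thesis
          proof (cases rule: reg3[OF G(5) H(1) dg0])
            case 1 note r4 = this
            have False using H E r0 r1 r2 r3 r4 by linarith
            then show ?thesis by simp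
          next
            case 2 note r4 = this
            have hv0: "hI da dg x0 = x0 + da - dg" using r1 H by (auto simp: hI_def)
            have hvj: "hI da dg x2 = x2 - 3*da" using r3 H by (auto simp: hI_def)
            have tm: "Tm da (dg - 3*da) (x0 + da - dg) = (x0 + da - dg) + 2*da + (dg - 3*da)" by (rule TmC; use r0 r1 r2 r3 r4 H E in linarith)
            have eq: "hI da dg x2 = Tm da (dg - 3*da) (hI da dg x0)" unfolding hv0 hvj tm using H E r0 r1 r2 r3 r4 by argo
            show ?thesis using eq r0 r1 r2 r3 r4 by simp
          next
            case 3 note r4 = this
            have False using H E r0 r1 r2 r3 r4 by linarith
            then show ?thesis by simp
          qed
        next
          case 2 note r3 = this
          have False using H E r0 r1 r2 r3 by linarith
          then show ?thesis by simp
        next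
          case 3 note r3 = this
          have hv0: "hI da dg x0 = x0 + da - dg" using r1 H by (auto simp: hI_def)
          have hvj: "hI da dg x1 = x1 + dg - da" using r2 H by (auto simp: hI_def)
          have tm: "Tm da (dg - 3*da) (x0 + da - dg) = (x0 + da - dg) + 2*da + (dg - 3*da)" by (rule TmC; use r0 r1 r2 r3 H E in linarith)
          have eq: "hI da dg x1 = Tm da (dg - 3*da) (hI da dg x0)" unfolding hv0 hvj tm using H E r0 r1 r2 r3 by argo
          show ?thesis using eq r0 r1 r2 r3 by simp
        qed
      next
        case 3 note r2 = this
        show ?thesis using K r0 r1 r2 by simp
      qed
    qed
  next
    case 3 note r0 = this
    show ?thesis
    proof (cases rule: reg3[OF G(2) H(1) dg0])
      case 1 note r1 = this
      have False using H E r0 r1 by linarith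
      then show ?thesis by simp
    next
      case 2 note r1 = this
      show ?thesis
      proof (cases rule: reg3[OF G(3) H(1) dg0])
        case 1 note r2 = this
        show ?thesis using K r0 r1 r2 by simp
      next
        case 2 note r2 = this
        have False using H E r0 r1 r2 by linarith
        then show ?thesis by simp
      next
        case 3 note r2 = this
        show ?thesis
        proof (cases rule: reg3[OF G(4) H(1) dg0])
          case 1 note r3 = this
          have False using H E r0 r1 r2 r3 by linarith
          then show ?thesis by simp
        next
          case 2 note r3 = this
          have hv0: "hI da dg x0 = x0 + dg - da" using r1 H by (auto simp: hI_def)
          have hvj: "hI da dg x1 = x1 + da - dg" using r2 H by (auto simp: hI_def)
          have tm: "Tm da (dg - 3*da) (x0 + dg - da) = (x0 + dg - da) + da - (dg - 3*da)" by (rule TmB; use r0 r1 r2 r3 H E in linarith)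
          have eq: "hI da dg x1 = Tm da (dg - 3*da) (hI da dg x0)" unfolding hv0 hvj tm using H E r0 r1 r2 r3 by argo
          show ?thesis using eq r0 r1 r2 r3 by simp
        next
          case 3 note r3 = this
          show ?thesis
          proof (cases rule: reg3[OF G(5) H(1) dg0])
            case 1 note r4 = this
            have False using H E r0 r1 r2 r3 r4 by linarith
            then show ?thesis by simp
          next
            case 2 note r4 = this
            show ?thesis
            proof (cases rule: reg3[OF G(6) H(1) dg0])
              case 1 note r5 = this
              show ?thesis
              proof (cases rule: reg3[OF G(7) H(1) dg0])
                case 1 note r6 = this
                have False using H E r0 r1 r2 r3 r4 r5 r6 by linarith
                then show ?thesis by simp
              next
                case 2 note r6 = this
                have hv0: "hI da dg x0 = x0 + dg - da" using r1 H by (auto simp: hI_def)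
                have hvj: "hI da dg x4 = x4 - 3*da" using r5 H by (auto simp: hI_def)
                have tm: "Tm da (dg - 3*da) (x0 + dg - da) = (x0 + dg - da) + da - (dg - 3*da)" by (rule TmB; use r0 r1 r2 r3 r4 r5 r6 H E in linarith)
                have eq: "hI da dg x4 = Tm da (dg - 3*da) (hI da dg x0)" unfolding hv0 hvj tm using H E r0 r1 r2 r3 r4 r5 r6 by argo
                show ?thesis using eq r0 r1 r2 r3 r4 r5 r6 by simp
              next
                case 3 note r6 = this
                have False using H E r0 r1 r2 r3 r4 r5 r6 by linarith
                then show ?thesis by simp
              qed
            next
              case 2 note r5 = this
              have False using H E r0 r1 r2 r3 r4 r5 by linarith
              then show ?thesis by simp
            next
              case 3 note r5 = this
              have hv0: "hI da dg x0 = x0 + dg - da" using r1 H by (auto simp: hI_def)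
              have hvj: "hI da dg x3 = x3 + dg - da" using r4 H by (auto simp: hI_def)
              have tm: "Tm da (dg - 3*da) (x0 + dg - da) = (x0 + dg - da) + da - (dg - 3*da)" by (rule TmB; use r0 r1 r2 r3 r4 r5 H E in linarith)
              have eq: "hI da dg x3 = Tm da (dg - 3*da) (hI da dg x0)" unfolding hv0 hvj tm using H E r0 r1 r2 r3 r4 r5 by argo
              show ?thesis using eq r0 r1 r2 r3 r4 r5 by simp
            qed
          next
            case 3 note r4 = this
            have False using H E r0 r1 r2 r3 r4 by linarith
            then show ?thesis by simp
          qed
        qed
      qed
    next
      case 3 note r1 = this
      show ?thesis
      proof (cases rule: reg3[OF G(3) H(1) dg0])
        case 1 note r2 = this
        have False using H E r0 r1 r2 by linarith
        then show ?thesis by simp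
      next
        case 2 note r2 = this
        show ?thesis using K r0 r1 r2 by simp
      next
        case 3 note r2 = this
        have False using H E r0 r1 r2 by linarith
        then show ?thesis by simp
      qed
    qed
  qed
qed

lemma K2_I:
  fixes da dg xp x0 x1 :: real
  assumes H: "0 \<le> da" "3*da \<le> dg"
    and G: "gen da dg xp" "gen da dg x0" "gen da dg x1"
    and E: "x0 = Tm da dg xp" "x1 = Tm da dg x0"
    and K: "Lt da dg xp = Lt da dg x1"
  shows "Lt da dg x0 = sigI (Lt da (dg - 3*da) (hI da dg x0)) \<and> gen da (dg - 3*da) (hI da dg x0)"
proof -
  have dg0: "0 \<le> dg" using H by linarith
  show ?thesis
  proof (cases rule: reg3[OF G(1) H(1) dg0])
    case 1 note r0 = this
    show ?thesis
    proof (cases rule: reg3[OF G(2) H(1) dg0])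
      case 1 note r1 = this
      have False using H E r0 r1 by linarith
      then show ?thesis by simp
    next
      case 2 note r1 = this
      show ?thesis
      proof (cases rule: reg3[OF G(3) H(1) dg0])
        case 1 note r2 = this
        have False using H E r0 r1 r2 by linarith
        then show ?thesis by simp
      next
        case 2 note r2 = this
        have False using H E r0 r1 r2 by linarith
        then show ?thesis by simp
      next
        case 3 note r2 = this
        show ?thesis using K r0 r1 r2 by simp
      qed
    next
      case 3 note r1 = this
      have False using H E r0 r1 by linarith
      then show ?thesis by simp
    qed
  next
    case 2 note r0 = this
    show ?thesis
    proof (cases rule: reg3[OF G(2) H(1) dg0])
      case 1 note r1 = this
      show ?thesis
      proof (cases rule: reg3[OF G(3) H(1) dg0])
        case 1 note r2 = this
        have False using H E r0 r1 r2 by linarith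
        then show ?thesis by simp
      next
        case 2 note r2 = this
        have hv0: "hI da dg x0 = x0 - 3*da" using r1 H by (auto simp: hI_def)
        have lt: "Lt da (dg - 3*da) (x0 - 3*da) = A" by (rule LtA; use r0 r1 r2 H E in linarith)
        have gn: "gen da (dg - 3*da) (x0 - 3*da)" by (rule gen_intro; use r0 r1 r2 H E in linarith)
        show ?thesis unfolding hv0 lt using gn r1 by (simp add: sigI_def)
      next
        case 3 note r2 = this
        have False using H E r0 r1 r2 by linarith
        then show ?thesis by simp
      qed
    next
      case 2 note r1 = this
      have False using H E r0 r1 by linarith
      then show ?thesis by simp
    next
      case 3 note r1 = this
      show ?thesis
      proof (cases rule: reg3[OF G(3) H(1) dg0])
        case 1 note r2 = this
        have False using H E r0 r1 r2 by linarith
        then show ?thesis by simp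
      next
        case 2 note r2 = this
        have hv0: "hI da dg x0 = x0 + da - dg" using r1 H by (auto simp: hI_def)
        have lt: "Lt da (dg - 3*da) (x0 + da - dg) = C" by (rule LtC; use r0 r1 r2 H E in linarith)
        have gn: "gen da (dg - 3*da) (x0 + da - dg)" by (rule gen_intro; use r0 r1 r2 H E in linarith)
        show ?thesis unfolding hv0 lt using gn r1 by (simp add: sigI_def)
      next
        case 3 note r2 = this
        show ?thesis using K r0 r1 r2 by simp
      qed
    qed
  next
    case 3 note r0 = this
    show ?thesis
    proof (cases rule: reg3[OF G(2) H(1) dg0])
      case 1 note r1 = this
      have False using H E r0 r1 by linarith
      then show ?thesis by simp
    next
      case 2 note r1 = this
      show ?thesis
      proof (cases rule: reg3[OF G(3) H(1) dg0])
        case 1 note r2 = this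
        show ?thesis using K r0 r1 r2 by simp
      next
        case 2 note r2 = this
        have False using H E r0 r1 r2 by linarith
        then show ?thesis by simp
      next
        case 3 note r2 = this
        have hv0: "hI da dg x0 = x0 + dg - da" using r1 H by (auto simp: hI_def)
        have lt: "Lt da (dg - 3*da) (x0 + dg - da) = B" by (rule LtB; use r0 r1 r2 H E in linarith)
        have gn: "gen da (dg - 3*da) (x0 + dg - da)" by (rule gen_intro; use r0 r1 r2 H E in linarith)
        show ?thesis unfolding hv0 lt using gn r1 by (simp add: sigI_def)
      qed
    next
      case 3 note r1 = this
      show ?thesis
      proof (cases rule: reg3[OF G(3) H(1) dg0])
        case 1 note r2 = this
        have False using H E r0 r1 r2 by linarith
        then show ?thesis by simp
      next
        case 2 note r2 = this
        show ?thesis using K r0 r1 r2 by simp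
      next
        case 3 note r2 = this
        have False using H E r0 r1 r2 by linarith
        then show ?thesis by simp
      qed
    qed
  qed
qed

lemma K3_I:
  fixes da dg xp x0 x1 x2 x3 x4 x5 :: real
  assumes H: "0 \<le> da" "3*da \<le> dg"
    and G: "gen da dg xp" "gen da dg x0" "gen da dg x1" "gen da dg x2" "gen da dg x3" "gen da dg x4" "gen da dg x5"
    and E: "x0 = Tm da dg xp" "x1 = Tm da dg x0" "x2 = Tm da dg x1" "x3 = Tm da dg x2" "x4 = Tm da dg x3" "x5 = Tm da dg x4"
  shows "Lt da dg xp = Lt da dg x1 \<or> Lt da dg x0 = Lt da dg x2 \<or> Lt da dg x1 = Lt da dg x3 \<or> Lt da dg x2 = Lt da dg x4 \<or> Lt da dg x3 = Lt da dg x5"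
proof -
  have dg0: "0 \<le> dg" using H by linarith
  show ?thesis
  proof (cases rule: reg3[OF G(1) H(1) dg0])
    case 1 note r0 = this
    show ?thesis
    proof (cases rule: reg3[OF G(2) H(1) dg0])
      case 1 note r1 = this
      have False using H E r0 r1 by linarith
      then show ?thesis by simp
    next
      case 2 note r1 = this
      show ?thesis
      proof (cases rule: reg3[OF G(3) H(1) dg0])
        case 1 note r2 = this
        have False using H E r0 r1 r2 by linarith
        then show ?thesis by simp
      next
        case 2 note r2 = this
        have False using H E r0 r1 r2 by linarith
        then show ?thesis by simp
      next
        case 3 note r2 = this
        show ?thesis
        proof (cases rule: reg3[OF G(4) H(1) dg0])
          case 1 note r3 = this
          have False using H E r0 r1 r2 r3 by linarith
          then show ?thesis by simp
        next
          case 2 note r3 = this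
          show ?thesis using r0 r1 r2 r3 by simp
        next
          case 3 note r3 = this
          show ?thesis
          proof (cases rule: reg3[OF G(5) H(1) dg0])
            case 1 note r4 = this
            have False using H E r0 r1 r2 r3 r4 by linarith
            then show ?thesis by simp
          next
            case 2 note r4 = this
            show ?thesis
            proof (cases rule: reg3[OF G(6) H(1) dg0])
              case 1 note r5 = this
              have False using H E r0 r1 r2 r3 r4 r5 by linarith
              then show ?thesis by simp
            next
              case 2 note r5 = this
              have False using H E r0 r1 r2 r3 r4 r5 by linarith
              then show ?thesis by simp
            next
              case 3 note r5 = this
              show ?thesis using r0 r1 r2 r3 r4 r5 by simp
            qed
          next
            case 3 note r4 = this
            have False using H E r0 r1 r2 r3 r4 by linarith
            then show ?thesis by simp
          qed
        qed
      qed
    next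
      case 3 note r1 = this
      have False using H E r0 r1 by linarith
      then show ?thesis by simp
    qed
  next
    case 2 note r0 = this
    show ?thesis
    proof (cases rule: reg3[OF G(2) H(1) dg0])
      case 1 note r1 = this
      show ?thesis
      proof (cases rule: reg3[OF G(3) H(1) dg0])
        case 1 note r2 = this
        have False using H E r0 r1 r2 by linarith
        then show ?thesis by simp
      next
        case 2 note r2 = this
        show ?thesis using r0 r1 r2 by simp
      next
        case 3 note r2 = this
        have False using H E r0 r1 r2 by linarith
        then show ?thesis by simp
      qed
    next
      case 2 note r1 = this
      have False using H E r0 r1 by linarith
      then show ?thesis by simp
    next
      case 3 note r1 = this
      show ?thesis
      proof (cases rule: reg3[OF G(3) H(1) dg0])
        case 1 note r2 = this
        have False using H E r0 r1 r2 by linarith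
        then show ?thesis by simp
      next
        case 2 note r2 = this
        show ?thesis using r0 r1 r2 by simp
      next
        case 3 note r2 = this
        show ?thesis
        proof (cases rule: reg3[OF G(4) H(1) dg0])
          case 1 note r3 = this
          have False using H E r0 r1 r2 r3 by linarith
          then show ?thesis by simp
        next
          case 2 note r3 = this
          show ?thesis
          proof (cases rule: reg3[OF G(5) H(1) dg0])
            case 1 note r4 = this
            show ?thesis
            proof (cases rule: reg3[OF G(6) H(1) dg0])
              case 1 note r5 = this
              have False using H E r0 r1 r2 r3 r4 r5 by linarith
              then show ?thesis by simp
            next
              case 2 note r5 = this
              show ?thesis using r0 r1 r2 r3 r4 r5 by simp
            next
              case 3 note r5 = this
              have False using H E r0 r1 r2 r3 r4 r5 by linarith
              then show ?thesis by simp
            qed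
          next
            case 2 note r4 = this
            have False using H E r0 r1 r2 r3 r4 by linarith
            then show ?thesis by simp
          next
            case 3 note r4 = this
            show ?thesis using r0 r1 r2 r3 r4 by simp
          qed
        next
          case 3 note r3 = this
          have False using H E r0 r1 r2 r3 by linarith
          then show ?thesis by simp
        qed
      qed
    qed
  next
    case 3 note r0 = this
    show ?thesis
    proof (cases rule: reg3[OF G(2) H(1) dg0])
      case 1 note r1 = this
      have False using H E r0 r1 by linarith
      then show ?thesis by simp
    next
      case 2 note r1 = this
      show ?thesis
      proof (cases rule: reg3[OF G(3) H(1) dg0])
        case 1 note r2 = this
        show ?thesis
        proof (cases rule: reg3[OF G(4) H(1) dg0])
          case 1 note r3 = this
          have False using H E r0 r1 r2 r3 by linarith
          then show ?thesis by simp
        next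
          case 2 note r3 = this
          show ?thesis using r0 r1 r2 r3 by simp
        next
          case 3 note r3 = this
          have False using H E r0 r1 r2 r3 by linarith
          then show ?thesis by simp
        qed
      next
        case 2 note r2 = this
        have False using H E r0 r1 r2 by linarith
        then show ?thesis by simp
      next
        case 3 note r2 = this
        show ?thesis using r0 r1 r2 by simp
      qed
    next
      case 3 note r1 = this
      show ?thesis
      proof (cases rule: reg3[OF G(3) H(1) dg0])
        case 1 note r2 = this
        have False using H E r0 r1 r2 by linarith
        then show ?thesis by simp
      next
        case 2 note r2 = this
        show ?thesis
        proof (cases rule: reg3[OF G(4) H(1) dg0])
          case 1 note r3 = this
          show ?thesis
          proof (cases rule: reg3[OF G(5) H(1) dg0])
            case 1 note r4 = this
            have False using H E r0 r1 r2 r3 r4 by linarith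
            then show ?thesis by simp
          next
            case 2 note r4 = this
            show ?thesis using r0 r1 r2 r3 r4 by simp
          next
            case 3 note r4 = this
            have False using H E r0 r1 r2 r3 r4 by linarith
            then show ?thesis by simp
          qed
        next
          case 2 note r3 = this
          have False using H E r0 r1 r2 r3 by linarith
          then show ?thesis by simp
        next
          case 3 note r3 = this
          show ?thesis using r0 r1 r2 r3 by simp
        qed
      next
        case 3 note r2 = this
        have False using H E r0 r1 r2 by linarith
        then show ?thesis by simp
      qed
    qed
  qed
qed

lemma K1_II:
  fixes da dg xp x0 x1 x2 x3 x4 x5 x6 :: real
  assumes H: "0 \<le> da" "2*da \<le> dg" "dg < 3*da"
    and G: "gen da dg xp" "gen da dg x0" "gen da dg x1" "gen da dg x2" "gen da dg x3" "gen da dg x4" "gen da dg x5" "gen da dg x6"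
    and E: "x0 = Tm da dg xp" "x1 = Tm da dg x0" "x2 = Tm da dg x1" "x3 = Tm da dg x2" "x4 = Tm da dg x3" "x5 = Tm da dg x4" "x6 = Tm da dg x5"
    and K: "Lt da dg xp = Lt da dg x1"
  shows "(Lt da dg x0 = Lt da dg x2 \<and> hII da dg x1 = Tm (3*da - dg) (dg - 2*da) (hII da dg x0)) \<or> (Lt da dg x0 \<noteq> Lt da dg x2 \<and> Lt da dg x1 = Lt da dg x3 \<and> hII da dg x2 = Tm (3*da - dg) (dg - 2*da) (hII da dg x0)) \<or> (Lt da dg x0 \<noteq> Lt da dg x2 \<and> Lt da dg x1 \<noteq> Lt da dg x3 \<and> Lt da dg x2 = Lt da dg x4 \<and> hII da dg x3 = Tm (3*da - dg) (dg - 2*da) (hII da dg x0)) \<or> (Lt da dg x0 \<noteq> Lt da dg x2 \<and> Lt da dg x1 \<noteq> Lt da dg x3 \<and> Lt da dg x2 \<noteq> Lt da dg x4 \<and> Lt da dg x3 = Lt da dg x5 \<and> hII da dg x4 = Tm (3*da - dg) (dg - 2*da) (hII da dg x0)) \<or> (Lt da dg x0 \<noteq> Lt da dg x2 \<and> Lt da dg x1 \<noteq> Lt da dg x3 \<and> Lt da dg x2 \<noteq> Lt da dg x4 \<and> Lt da dg x3 \<noteq> Lt da dg x5 \<and> Lt da dg x4 = Lt da dg x6 \<and> hII da dg x5 = Tm (3*da - dg) (dg - 2*da) (hII da dg x0))"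
proof -
  have dg0: "0 \<le> dg" using H by linarith
  show ?thesis
  proof (cases rule: reg3[OF G(1) H(1) dg0])
    case 1 note r0 = this
    show ?thesis
    proof (cases rule: reg3[OF G(2) H(1) dg0])
      case 1 note r1 = this
      have False using H E r0 r1 by linarith
      then show ?thesis by simp
    next
      case 2 note r1 = this
      show ?thesis
      proof (cases rule: reg3[OF G(3) H(1) dg0])
        case 1 note r2 = this
        have False using H E r0 r1 r2 by linarith
        then show ?thesis by simp
      next
        case 2 note r2 = this
        have False using H E r0 r1 r2 by linarith
        then show ?thesis by simp
      next
        case 3 note r2 = this
        show ?thesis using K r0 r1 r2 by simp
      qed
    next
      case 3 note r1 = this
      have False using H E r0 r1 by linarith
      then show ?thesis by simp
    qed
  next
    case 2 note r0 = this
    show ?thesis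
    proof (cases rule: reg3[OF G(2) H(1) dg0])
      case 1 note r1 = this
      show ?thesis
      proof (cases rule: reg3[OF G(3) H(1) dg0])
        case 1 note r2 = this
        have False using H E r0 r1 r2 by linarith
        then show ?thesis by simp
      next
        case 2 note r2 = this
        show ?thesis
        proof (cases rule: reg3[OF G(4) H(1) dg0])
          case 1 note r3 = this
          have False using H E r0 r1 r2 r3 by linarith
          then show ?thesis by simp
        next
          case 2 note r3 = this
          have False using H E r0 r1 r2 r3 by linarith
          then show ?thesis by simp
        next
          case 3 note r3 = this
          show ?thesis
          proof (cases rule: reg3[OF G(5) H(1) dg0])
            case 1 note r4 = this
            have False using H E r0 r1 r2 r3 r4 by linarith
            then show ?thesis by simp
          next
            case 2 note r4 = this
            have False using H E r0 r1 r2 r3 r4 by linarith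
            then show ?thesis by simp
          next
            case 3 note r4 = this
            show ?thesis
            proof (cases rule: reg3[OF G(6) H(1) dg0])
              case 1 note r5 = this
              have False using H E r0 r1 r2 r3 r4 r5 by linarith
              then show ?thesis by simp
            next
              case 2 note r5 = this
              show ?thesis
              proof (cases rule: reg3[OF G(7) H(1) dg0])
                case 1 note r6 = this
                show ?thesis
                proof (cases rule: reg3[OF G(8) H(1) dg0])
                  case 1 note r7 = this
                  have False using H E r0 r1 r2 r3 r4 r5 r6 r7 by linarith
                  then show ?thesis by simp
                next
                  case 2 note r7 = this
                  have hv0: "hII da dg x0 = x0 - 3*da" using r1 H by (auto simp: hII_def)
                  have hvj: "hII da dg x5 = x5 - 3*da" using r6 H by (auto simp: hII_def)
                  have tm: "Tm (3*da - dg) (dg - 2*da) (x0 - 3*da) = (x0 - 3*da) + (3*da - dg) - (dg - 2*da)" by (rule TmB; use r0 r1 r2 r3 r4 r5 r6 r7 H E in linarith)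
                  have eq: "hII da dg x5 = Tm (3*da - dg) (dg - 2*da) (hII da dg x0)" unfolding hv0 hvj tm using H E r0 r1 r2 r3 r4 r5 r6 r7 by argo
                  show ?thesis using eq r0 r1 r2 r3 r4 r5 r6 r7 by simp
                next
                  case 3 note r7 = this
                  have False using H E r0 r1 r2 r3 r4 r5 r6 r7 by linarith
                  then show ?thesis by simp
                qed
              next
                case 2 note r6 = this
                have False using H E r0 r1 r2 r3 r4 r5 r6 by linarith
                then show ?thesis by simp
              next
                case 3 note r6 = this
                have hv0: "hII da dg x0 = x0 - 3*da" using r1 H by (auto simp: hII_def)
                have hvj: "hII da dg x4 = x4 + dg - da" using r5 H by (auto simp: hII_def)
                have tm: "Tm (3*da - dg) (dg - 2*da) (x0 - 3*da) = (x0 - 3*da) + (3*da - dg) - (dg - 2*da)" by (rule TmB; use r0 r1 r2 r3 r4 r5 r6 H E in linarith)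
                have eq: "hII da dg x4 = Tm (3*da - dg) (dg - 2*da) (hII da dg x0)" unfolding hv0 hvj tm using H E r0 r1 r2 r3 r4 r5 r6 by argo
                show ?thesis using eq r0 r1 r2 r3 r4 r5 r6 by simp
              qed
            next
              case 3 note r5 = this
              have hv0: "hII da dg x0 = x0 - 3*da" using r1 H by (auto simp: hII_def)
              have hvj: "hII da dg x3 = x3" using r4 H by (auto simp: hII_def)
              have tm: "Tm (3*da - dg) (dg - 2*da) (x0 - 3*da) = (x0 - 3*da) + (3*da - dg) - (dg - 2*da)" by (rule TmB; use r0 r1 r2 r3 r4 r5 H E in linarith)
              have eq: "hII da dg x3 = Tm (3*da - dg) (dg - 2*da) (hII da dg x0)" unfolding hv0 hvj tm using H E r0 r1 r2 r3 r4 r5 by argo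
              show ?thesis using eq r0 r1 r2 r3 r4 r5 by simp
            qed
          qed
        qed
      next
        case 3 note r2 = this
        have False using H E r0 r1 r2 by linarith
        then show ?thesis by simp
      qed
    next
      case 2 note r1 = this
      have False using H E r0 r1 by linarith
      then show ?thesis by simp
    next
      case 3 note r1 = this
      show ?thesis
      proof (cases rule: reg3[OF G(3) H(1) dg0])
        case 1 note r2 = this
        have False using H E r0 r1 r2 by linarith
        then show ?thesis by simp
      next
        case 2 note r2 = this
        have False using H E r0 r1 r2 by linarith
        then show ?thesis by simp
      next
        case 3 note r2 = this
        show ?thesis using K r0 r1 r2 by simp
      qed
    qed
  next
    case 3 note r0 = this
    show ?thesis
    proof (cases rule: reg3[OF G(2) H(1) dg0])
      case 1 note r1 = this
      have False using H E r0 r1 by linarith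
      then show ?thesis by simp
    next
      case 2 note r1 = this
      show ?thesis
      proof (cases rule: reg3[OF G(3) H(1) dg0])
        case 1 note r2 = this
        show ?thesis using K r0 r1 r2 by simp
      next
        case 2 note r2 = this
        have False using H E r0 r1 r2 by linarith
        then show ?thesis by simp
      next
        case 3 note r2 = this
        show ?thesis
        proof (cases rule: reg3[OF G(4) H(1) dg0])
          case 1 note r3 = this
          have False using H E r0 r1 r2 r3 by linarith
          then show ?thesis by simp
        next
          case 2 note r3 = this
          have False using H E r0 r1 r2 r3 by linarith
          then show ?thesis by simp
        next
          case 3 note r3 = this
          show ?thesis
          proof (cases rule: reg3[OF G(5) H(1) dg0])
            case 1 note r4 = this
            have False using H E r0 r1 r2 r3 r4 by linarith
            then show ?thesis by simp
          next
            case 2 note r4 = this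
            show ?thesis
            proof (cases rule: reg3[OF G(6) H(1) dg0])
              case 1 note r5 = this
              show ?thesis
              proof (cases rule: reg3[OF G(7) H(1) dg0])
                case 1 note r6 = this
                have False using H E r0 r1 r2 r3 r4 r5 r6 by linarith
                then show ?thesis by simp
              next
                case 2 note r6 = this
                have hv0: "hII da dg x0 = x0 + dg - da" using r1 H by (auto simp: hII_def)
                have hvj: "hII da dg x4 = x4 - 3*da" using r5 H by (auto simp: hII_def)
                have tm: "Tm (3*da - dg) (dg - 2*da) (x0 + dg - da) = (x0 + dg - da) + 2*(3*da - dg) + (dg - 2*da)" by (rule TmC; use r0 r1 r2 r3 r4 r5 r6 H E in linarith)
                have eq: "hII da dg x4 = Tm (3*da - dg) (dg - 2*da) (hII da dg x0)" unfolding hv0 hvj tm using H E r0 r1 r2 r3 r4 r5 r6 by argo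
                show ?thesis using eq r0 r1 r2 r3 r4 r5 r6 by simp
              next
                case 3 note r6 = this
                have False using H E r0 r1 r2 r3 r4 r5 r6 by linarith
                then show ?thesis by simp
              qed
            next
              case 2 note r5 = this
              have False using H E r0 r1 r2 r3 r4 r5 by linarith
              then show ?thesis by simp
            next
              case 3 note r5 = this
              have False using H E r0 r1 r2 r3 r4 r5 by linarith
              then show ?thesis by simp
            qed
          next
            case 3 note r4 = this
            have hv0: "hII da dg x0 = x0 + dg - da" using r1 H by (auto simp: hII_def)
            have hvj: "hII da dg x2 = x2" using r3 H by (auto simp: hII_def)
            have tm: "Tm (3*da - dg) (dg - 2*da) (x0 + dg - da) = (x0 + dg - da) + 2*(3*da - dg) + (dg - 2*da)" by (rule TmC; use r0 r1 r2 r3 r4 H E in linarith)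
            have eq: "hII da dg x2 = Tm (3*da - dg) (dg - 2*da) (hII da dg x0)" unfolding hv0 hvj tm using H E r0 r1 r2 r3 r4 by argo
            show ?thesis using eq r0 r1 r2 r3 r4 by simp
          qed
        qed
      qed
    next
      case 3 note r1 = this
      show ?thesis
      proof (cases rule: reg3[OF G(3) H(1) dg0])
        case 1 note r2 = this
        have False using H E r0 r1 r2 by linarith
        then show ?thesis by simp
      next
        case 2 note r2 = this
        show ?thesis using K r0 r1 r2 by simp
      next
        case 3 note r2 = this
        show ?thesis
        proof (cases rule: reg3[OF G(4) H(1) dg0])
          case 1 note r3 = this
          have False using H E r0 r1 r2 r3 by linarith
          then show ?thesis by simp
        next
          case 2 note r3 = this
          show ?thesis
          proof (cases rule: reg3[OF G(5) H(1) dg0])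
            case 1 note r4 = this
            show ?thesis
            proof (cases rule: reg3[OF G(6) H(1) dg0])
              case 1 note r5 = this
              have False using H E r0 r1 r2 r3 r4 r5 by linarith
              then show ?thesis by simp
            next
              case 2 note r5 = this
              have hv0: "hII da dg x0 = x0" using r1 H by (auto simp: hII_def)
              have hvj: "hII da dg x3 = x3 - 3*da" using r4 H by (auto simp: hII_def)
              have tm: "Tm (3*da - dg) (dg - 2*da) (x0) = (x0) - (3*da - dg) - 2*(dg - 2*da)" by (rule TmA; use r0 r1 r2 r3 r4 r5 H E in linarith)
              have eq: "hII da dg x3 = Tm (3*da - dg) (dg - 2*da) (hII da dg x0)" unfolding hv0 hvj tm using H E r0 r1 r2 r3 r4 r5 by argo
              show ?thesis using eq r0 r1 r2 r3 r4 r5 by simp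
            next
              case 3 note r5 = this
              have False using H E r0 r1 r2 r3 r4 r5 by linarith
              then show ?thesis by simp
            qed
          next
            case 2 note r4 = this
            have False using H E r0 r1 r2 r3 r4 by linarith
            then show ?thesis by simp
          next
            case 3 note r4 = this
            have hv0: "hII da dg x0 = x0" using r1 H by (auto simp: hII_def)
            have hvj: "hII da dg x2 = x2 + dg - da" using r3 H by (auto simp: hII_def)
            have tm: "Tm (3*da - dg) (dg - 2*da) (x0) = (x0) - (3*da - dg) - 2*(dg - 2*da)" by (rule TmA; use r0 r1 r2 r3 r4 H E in linarith)
            have eq: "hII da dg x2 = Tm (3*da - dg) (dg - 2*da) (hII da dg x0)" unfolding hv0 hvj tm using H E r0 r1 r2 r3 r4 by argo
            show ?thesis using eq r0 r1 r2 r3 r4 by simp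
          qed
        next
          case 3 note r3 = this
          have False using H E r0 r1 r2 r3 by linarith
          then show ?thesis by simp
        qed
      qed
    qed
  qed
qed

lemma K2_II:
  fixes da dg xp x0 x1 :: real
  assumes H: "0 \<le> da" "2*da \<le> dg" "dg < 3*da"
    and G: "gen da dg xp" "gen da dg x0" "gen da dg x1"
    and E: "x0 = Tm da dg xp" "x1 = Tm da dg x0"
    and K: "Lt da dg xp = Lt da dg x1"
  shows "Lt da dg x0 = sigII (Lt (3*da - dg) (dg - 2*da) (hII da dg x0)) \<and> gen (3*da - dg) (dg - 2*da) (hII da dg x0)"
proof -
  have dg0: "0 \<le> dg" using H by linarith
  show ?thesis
  proof (cases rule: reg3[OF G(1) H(1) dg0])
    case 1 note r0 = this
    show ?thesis
    proof (cases rule: reg3[OF G(2) H(1) dg0])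
      case 1 note r1 = this
      have False using H E r0 r1 by linarith
      then show ?thesis by simp
    next
      case 2 note r1 = this
      show ?thesis
      proof (cases rule: reg3[OF G(3) H(1) dg0])
        case 1 note r2 = this
        have False using H E r0 r1 r2 by linarith
        then show ?thesis by simp
      next
        case 2 note r2 = this
        have False using H E r0 r1 r2 by linarith
        then show ?thesis by simp
      next
        case 3 note r2 = this
        show ?thesis using K r0 r1 r2 by simp
      qed
    next
      case 3 note r1 = this
      have False using H E r0 r1 by linarith
      then show ?thesis by simp
    qed
  next
    case 2 note r0 = this
    show ?thesis
    proof (cases rule: reg3[OF G(2) H(1) dg0])
      case 1 note r1 = this
      show ?thesis
      proof (cases rule: reg3[OF G(3) H(1) dg0])
        case 1 note r2 = this
        have False using H E r0 r1 r2 by linarith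
        then show ?thesis by simp
      next
        case 2 note r2 = this
        have hv0: "hII da dg x0 = x0 - 3*da" using r1 H by (auto simp: hII_def)
        have lt: "Lt (3*da - dg) (dg - 2*da) (x0 - 3*da) = B" by (rule LtB; use r0 r1 r2 H E in linarith)
        have gn: "gen (3*da - dg) (dg - 2*da) (x0 - 3*da)" by (rule gen_intro; use r0 r1 r2 H E in linarith)
        show ?thesis unfolding hv0 lt using gn r1 by (simp add: sigII_def)
      next
        case 3 note r2 = this
        have False using H E r0 r1 r2 by linarith
        then show ?thesis by simp
      qed
    next
      case 2 note r1 = this
      have False using H E r0 r1 by linarith
      then show ?thesis by simp
    next
      case 3 note r1 = this
      show ?thesis
      proof (cases rule: reg3[OF G(3) H(1) dg0])
        case 1 note r2 = this
        have False using H E r0 r1 r2 by linarith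
        then show ?thesis by simp
      next
        case 2 note r2 = this
        have False using H E r0 r1 r2 by linarith
        then show ?thesis by simp
      next
        case 3 note r2 = this
        show ?thesis using K r0 r1 r2 by simp
      qed
    qed
  next
    case 3 note r0 = this
    show ?thesis
    proof (cases rule: reg3[OF G(2) H(1) dg0])
      case 1 note r1 = this
      have False using H E r0 r1 by linarith
      then show ?thesis by simp
    next
      case 2 note r1 = this
      show ?thesis
      proof (cases rule: reg3[OF G(3) H(1) dg0])
        case 1 note r2 = this
        show ?thesis using K r0 r1 r2 by simp
      next
        case 2 note r2 = this
        have False using H E r0 r1 r2 by linarith
        then show ?thesis by simp
      next
        case 3 note r2 = this
        have hv0: "hII da dg x0 = x0 + dg - da" using r1 H by (auto simp: hII_def)
        have lt: "Lt (3*da - dg) (dg - 2*da) (x0 + dg - da) = C" by (rule LtC; use r0 r1 r2 H E in linarith)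
        have gn: "gen (3*da - dg) (dg - 2*da) (x0 + dg - da)" by (rule gen_intro; use r0 r1 r2 H E in linarith)
        show ?thesis unfolding hv0 lt using gn r1 by (simp add: sigII_def)
      qed
    next
      case 3 note r1 = this
      show ?thesis
      proof (cases rule: reg3[OF G(3) H(1) dg0])
        case 1 note r2 = this
        have False using H E r0 r1 r2 by linarith
        then show ?thesis by simp
      next
        case 2 note r2 = this
        show ?thesis using K r0 r1 r2 by simp
      next
        case 3 note r2 = this
        have hv0: "hII da dg x0 = x0" using r1 H by (auto simp: hII_def)
        have lt: "Lt (3*da - dg) (dg - 2*da) (x0) = A" by (rule LtA; use r0 r1 r2 H E in linarith)
        have gn: "gen (3*da - dg) (dg - 2*da) (x0)" by (rule gen_intro; use r0 r1 r2 H E in linarith)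
        show ?thesis unfolding hv0 lt using gn r1 by (simp add: sigII_def)
      qed
    qed
  qed
qed

lemma K3_II:
  fixes da dg xp x0 x1 x2 x3 x4 x5 :: real
  assumes H: "0 \<le> da" "2*da \<le> dg" "dg < 3*da"
    and G: "gen da dg xp" "gen da dg x0" "gen da dg x1" "gen da dg x2" "gen da dg x3" "gen da dg x4" "gen da dg x5"
    and E: "x0 = Tm da dg xp" "x1 = Tm da dg x0" "x2 = Tm da dg x1" "x3 = Tm da dg x2" "x4 = Tm da dg x3" "x5 = Tm da dg x4"
  shows "Lt da dg xp = Lt da dg x1 \<or> Lt da dg x0 = Lt da dg x2 \<or> Lt da dg x1 = Lt da dg x3 \<or> Lt da dg x2 = Lt da dg x4 \<or> Lt da dg x3 = Lt da dg x5"
proof -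
  have dg0: "0 \<le> dg" using H by linarith
  show ?thesis
  proof (cases rule: reg3[OF G(1) H(1) dg0])
    case 1 note r0 = this
    show ?thesis
    proof (cases rule: reg3[OF G(2) H(1) dg0])
      case 1 note r1 = this
      have False using H E r0 r1 by linarith
      then show ?thesis by simp
    next
      case 2 note r1 = this
      show ?thesis
      proof (cases rule: reg3[OF G(3) H(1) dg0])
        case 1 note r2 = this
        have False using H E r0 r1 r2 by linarith
        then show ?thesis by simp
      next
        case 2 note r2 = this
        have False using H E r0 r1 r2 by linarith
        then show ?thesis by simp
      next
        case 3 note r2 = this
        show ?thesis
        proof (cases rule: reg3[OF G(4) H(1) dg0])
          case 1 note r3 = this
          have False using H E r0 r1 r2 r3 by linarith
          then show ?thesis by simp
        next
          case 2 note r3 = this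
          have False using H E r0 r1 r2 r3 by linarith
          then show ?thesis by simp
        next
          case 3 note r3 = this
          show ?thesis
          proof (cases rule: reg3[OF G(5) H(1) dg0])
            case 1 note r4 = this
            have False using H E r0 r1 r2 r3 r4 by linarith
            then show ?thesis by simp
          next
            case 2 note r4 = this
            show ?thesis
            proof (cases rule: reg3[OF G(6) H(1) dg0])
              case 1 note r5 = this
              show ?thesis
              proof (cases rule: reg3[OF G(7) H(1) dg0])
                case 1 note r6 = this
                have False using H E r0 r1 r2 r3 r4 r5 r6 by linarith
                then show ?thesis by simp
              next
                case 2 note r6 = this
                show ?thesis using r0 r1 r2 r3 r4 r5 r6 by simp
              next
                case 3 note r6 = this
                have False using H E r0 r1 r2 r3 r4 r5 r6 by linarith
                then show ?thesis by simp
              qed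
            next
              case 2 note r5 = this
              have False using H E r0 r1 r2 r3 r4 r5 by linarith
              then show ?thesis by simp
            next
              case 3 note r5 = this
              show ?thesis using r0 r1 r2 r3 r4 r5 by simp
            qed
          next
            case 3 note r4 = this
            show ?thesis using r0 r1 r2 r3 r4 by simp
          qed
        qed
      qed
    next
      case 3 note r1 = this
      have False using H E r0 r1 by linarith
      then show ?thesis by simp
    qed
  next
    case 2 note r0 = this
    show ?thesis
    proof (cases rule: reg3[OF G(2) H(1) dg0])
      case 1 note r1 = this
      show ?thesis
      proof (cases rule: reg3[OF G(3) H(1) dg0])
        case 1 note r2 = this
        have False using H E r0 r1 r2 by linarith
        then show ?thesis by simp
      next
        case 2 note r2 = this
        show ?thesis using r0 r1 r2 by simp
      next
        case 3 note r2 = this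
        have False using H E r0 r1 r2 by linarith
        then show ?thesis by simp
      qed
    next
      case 2 note r1 = this
      have False using H E r0 r1 by linarith
      then show ?thesis by simp
    next
      case 3 note r1 = this
      show ?thesis
      proof (cases rule: reg3[OF G(3) H(1) dg0])
        case 1 note r2 = this
        have False using H E r0 r1 r2 by linarith
        then show ?thesis by simp
      next
        case 2 note r2 = this
        have False using H E r0 r1 r2 by linarith
        then show ?thesis by simp
      next
        case 3 note r2 = this
        show ?thesis
        proof (cases rule: reg3[OF G(4) H(1) dg0])
          case 1 note r3 = this
          have False using H E r0 r1 r2 r3 by linarith
          then show ?thesis by simp
        next
          case 2 note r3 = this
          show ?thesis
          proof (cases rule: reg3[OF G(5) H(1) dg0])
            case 1 note r4 = this
            show ?thesis
            proof (cases rule: reg3[OF G(6) H(1) dg0])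
              case 1 note r5 = this
              have False using H E r0 r1 r2 r3 r4 r5 by linarith
              then show ?thesis by simp
            next
              case 2 note r5 = this
              show ?thesis using r0 r1 r2 r3 r4 r5 by simp
            next
              case 3 note r5 = this
              have False using H E r0 r1 r2 r3 r4 r5 by linarith
              then show ?thesis by simp
            qed
          next
            case 2 note r4 = this
            have False using H E r0 r1 r2 r3 r4 by linarith
            then show ?thesis by simp
          next
            case 3 note r4 = this
            show ?thesis using r0 r1 r2 r3 r4 by simp
          qed
        next
          case 3 note r3 = this
          show ?thesis using r0 r1 r2 r3 by simp
        qed
      qed
    qed
  next
    case 3 note r0 = this
    show ?thesis
    proof (cases rule: reg3[OF G(2) H(1) dg0])
      case 1 note r1 = this
      have False using H E r0 r1 by linarith
      then show ?thesis by simp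
    next
      case 2 note r1 = this
      show ?thesis
      proof (cases rule: reg3[OF G(3) H(1) dg0])
        case 1 note r2 = this
        show ?thesis
        proof (cases rule: reg3[OF G(4) H(1) dg0])
          case 1 note r3 = this
          have False using H E r0 r1 r2 r3 by linarith
          then show ?thesis by simp
        next
          case 2 note r3 = this
          show ?thesis using r0 r1 r2 r3 by simp
        next
          case 3 note r3 = this
          have False using H E r0 r1 r2 r3 by linarith
          then show ?thesis by simp
        qed
      next
        case 2 note r2 = this
        have False using H E r0 r1 r2 by linarith
        then show ?thesis by simp
      next
        case 3 note r2 = this
        show ?thesis using r0 r1 r2 by simp
      qed
    next
      case 3 note r1 = this
      show ?thesis
      proof (cases rule: reg3[OF G(3) H(1) dg0])
        case 1 note r2 = this
        have False using H E r0 r1 r2 by linarith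
        then show ?thesis by simp
      next
        case 2 note r2 = this
        show ?thesis
        proof (cases rule: reg3[OF G(4) H(1) dg0])
          case 1 note r3 = this
          show ?thesis
          proof (cases rule: reg3[OF G(5) H(1) dg0])
            case 1 note r4 = this
            have False using H E r0 r1 r2 r3 r4 by linarith
            then show ?thesis by simp
          next
            case 2 note r4 = this
            show ?thesis using r0 r1 r2 r3 r4 by simp
          next
            case 3 note r4 = this
            have False using H E r0 r1 r2 r3 r4 by linarith
            then show ?thesis by simp
          qed
        next
          case 2 note r3 = this
          have False using H E r0 r1 r2 r3 by linarith
          then show ?thesis by simp
        next
          case 3 note r3 = this
          show ?thesis using r0 r1 r2 r3 by simp
        qed
      next
        case 3 note r2 = this
        show ?thesis using r0 r1 r2 by simp
      qed
    qed
  qed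
qed

lemma K1_III:
  fixes da dg xp x0 x1 x2 x3 x4 x5 x6 :: real
  assumes H: "0 \<le> da" "da \<le> dg" "dg < 2*da"
    and G: "gen da dg xp" "gen da dg x0" "gen da dg x1" "gen da dg x2" "gen da dg x3" "gen da dg x4" "gen da dg x5" "gen da dg x6"
    and E: "x0 = Tm da dg xp" "x1 = Tm da dg x0" "x2 = Tm da dg x1" "x3 = Tm da dg x2" "x4 = Tm da dg x3" "x5 = Tm da dg x4" "x6 = Tm da dg x5"
    and K: "Lt da dg xp = Lt da dg x1"
  shows "(Lt da dg x0 = Lt da dg x2 \<and> hIII da dg x1 = Tm (2*da - dg) da (hIII da dg x0)) \<or> (Lt da dg x0 \<noteq> Lt da dg x2 \<and> Lt da dg x1 = Lt da dg x3 \<and> hIII da dg x2 = Tm (2*da - dg) da (hIII da dg x0)) \<or> (Lt da dg x0 \<noteq> Lt da dg x2 \<and> Lt da dg x1 \<noteq> Lt da dg x3 \<and> Lt da dg x2 = Lt da dg x4 \<and> hIII da dg x3 = Tm (2*da - dg) da (hIII da dg x0)) \<or> (Lt da dg x0 \<noteq> Lt da dg x2 \<and> Lt da dg x1 \<noteq> Lt da dg x3 \<and> Lt da dg x2 \<noteq> Lt da dg x4 \<and> Lt da dg x3 = Lt da dg x5 \<and> hIII da dg x4 = Tm (2*da - dg) da (hIII da dg x0)) \<or> (Lt da dg x0 \<noteq> Lt da dg x2 \<and> Lt da dg x1 \<noteq> Lt da dg x3 \<and> Lt da dg x2 \<noteq> Lt da dg x4 \<and> Lt da dg x3 \<noteq>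 Lt da dg x5 \<and> Lt da dg x4 = Lt da dg x6 \<and> hIII da dg x5 = Tm (2*da - dg) da (hIII da dg x0))"
proof -
  have dg0: "0 \<le> dg" using H by linarith
  show ?thesis
  proof (cases rule: reg3[OF G(1) H(1) dg0])
    case 1 note r0 = this
    show ?thesis
    proof (cases rule: reg3[OF G(2) H(1) dg0])
      case 1 note r1 = this
      have False using H E r0 r1 by linarith
      then show ?thesis by simp
    next
      case 2 note r1 = this
      show ?thesis
      proof (cases rule: reg3[OF G(3) H(1) dg0])
        case 1 note r2 = this
        show ?thesis
        proof (cases rule: reg3[OF G(4) H(1) dg0])
          case 1 note r3 = this
          have False using H E r0 r1 r2 r3 by linarith
          then show ?thesis by simp
        next
          case 2 note r3 = this
          have hv0: "hIII da dg x0 = x0 + 3*da" using r1 H by (auto simp: hIII_def)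
          have hvj: "hIII da dg x1 = x1 - 3*da" using r2 H by (auto simp: hIII_def)
          have tm: "Tm (2*da - dg) da (x0 + 3*da) = (x0 + 3*da) - (2*da - dg) - 2*da" by (rule TmA; use r0 r1 r2 r3 H E in linarith)
          have eq: "hIII da dg x1 = Tm (2*da - dg) da (hIII da dg x0)" unfolding hv0 hvj tm using H E r0 r1 r2 r3 by argo
          show ?thesis using eq r0 r1 r2 r3 by simp
        next
          case 3 note r3 = this
          have False using H E r0 r1 r2 r3 by linarith
          then show ?thesis by simp
        qed
      next
        case 2 note r2 = this
        have False using H E r0 r1 r2 by linarith
        then show ?thesis by simp
      next
        case 3 note r2 = this
        show ?thesis using K r0 r1 r2 by simp
      qed
    next
      case 3 note r1 = this
      have False using H E r0 r1 by linarith
      then show ?thesis by simp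
    qed
  next
    case 2 note r0 = this
    show ?thesis
    proof (cases rule: reg3[OF G(2) H(1) dg0])
      case 1 note r1 = this
      show ?thesis
      proof (cases rule: reg3[OF G(3) H(1) dg0])
        case 1 note r2 = this
        have False using H E r0 r1 r2 by linarith
        then show ?thesis by simp
      next
        case 2 note r2 = this
        show ?thesis
        proof (cases rule: reg3[OF G(4) H(1) dg0])
          case 1 note r3 = this
          have hv0: "hIII da dg x0 = x0 - 3*da" using r1 H by (auto simp: hIII_def)
          have hvj: "hIII da dg x1 = x1 + 3*da" using r2 H by (auto simp: hIII_def)
          have tm: "Tm (2*da - dg) da (x0 - 3*da) = (x0 - 3*da) + 2*(2*da - dg) + da" by (rule TmC; use r0 r1 r2 r3 H E in linarith)
          have eq: "hIII da dg x1 = Tm (2*da - dg) da (hIII da dg x0)" unfolding hv0 hvj tm using H E r0 r1 r2 r3 by argo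
          show ?thesis using eq r0 r1 r2 r3 by simp
        next
          case 2 note r3 = this
          have False using H E r0 r1 r2 r3 by linarith
          then show ?thesis by simp
        next
          case 3 note r3 = this
          show ?thesis
          proof (cases rule: reg3[OF G(5) H(1) dg0])
            case 1 note r4 = this
            have False using H E r0 r1 r2 r3 r4 by linarith
            then show ?thesis by simp
          next
            case 2 note r4 = this
            have False using H E r0 r1 r2 r3 r4 by linarith
            then show ?thesis by simp
          next
            case 3 note r4 = this
            show ?thesis
            proof (cases rule: reg3[OF G(6) H(1) dg0])
              case 1 note r5 = this
              have False using H E r0 r1 r2 r3 r4 r5 by linarith
              then show ?thesis by simp
            next
              case 2 note r5 = this
              have False using H E r0 r1 r2 r3 r4 r5 by linarith
              then show ?thesis by simp
            next
              case 3 note r5 = this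
              have hv0: "hIII da dg x0 = x0 - 3*da" using r1 H by (auto simp: hIII_def)
              have hvj: "hIII da dg x3 = x3" using r4 H by (auto simp: hIII_def)
              have tm: "Tm (2*da - dg) da (x0 - 3*da) = (x0 - 3*da) + 2*(2*da - dg) + da" by (rule TmC; use r0 r1 r2 r3 r4 r5 H E in linarith)
              have eq: "hIII da dg x3 = Tm (2*da - dg) da (hIII da dg x0)" unfolding hv0 hvj tm using H E r0 r1 r2 r3 r4 r5 by argo
              show ?thesis using eq r0 r1 r2 r3 r4 r5 by simp
            qed
          qed
        qed
      next
        case 3 note r2 = this
        have False using H E r0 r1 r2 by linarith
        then show ?thesis by simp
      qed
    next
      case 2 note r1 = this
      have False using H E r0 r1 by linarith
      then show ?thesis by simp
    next
      case 3 note r1 = this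
      show ?thesis
      proof (cases rule: reg3[OF G(3) H(1) dg0])
        case 1 note r2 = this
        have False using H E r0 r1 r2 by linarith
        then show ?thesis by simp
      next
        case 2 note r2 = this
        have False using H E r0 r1 r2 by linarith
        then show ?thesis by simp
      next
        case 3 note r2 = this
        show ?thesis using K r0 r1 r2 by simp
      qed
    qed
  next
    case 3 note r0 = this
    show ?thesis
    proof (cases rule: reg3[OF G(2) H(1) dg0])
      case 1 note r1 = this
      have False using H E r0 r1 by linarith
      then show ?thesis by simp
    next
      case 2 note r1 = this
      show ?thesis
      proof (cases rule: reg3[OF G(3) H(1) dg0])
        case 1 note r2 = this
        show ?thesis using K r0 r1 r2 by simp
      next
        case 2 note r2 = this
        have False using H E r0 r1 r2 by linarith
        then show ?thesis by simp
      next
        case 3 note r2 = this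
        have False using H E r0 r1 r2 by linarith
        then show ?thesis by simp
      qed
    next
      case 3 note r1 = this
      show ?thesis
      proof (cases rule: reg3[OF G(3) H(1) dg0])
        case 1 note r2 = this
        have False using H E r0 r1 r2 by linarith
        then show ?thesis by simp
      next
        case 2 note r2 = this
        show ?thesis using K r0 r1 r2 by simp
      next
        case 3 note r2 = this
        show ?thesis
        proof (cases rule: reg3[OF G(4) H(1) dg0])
          case 1 note r3 = this
          have False using H E r0 r1 r2 r3 by linarith
          then show ?thesis by simp
        next
          case 2 note r3 = this
          show ?thesis
          proof (cases rule: reg3[OF G(5) H(1) dg0])
            case 1 note r4 = this
            show ?thesis
            proof (cases rule: reg3[OF G(6) H(1) dg0])
              case 1 note r5 = this
              have False using H E r0 r1 r2 r3 r4 r5 by linarith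
              then show ?thesis by simp
            next
              case 2 note r5 = this
              have hv0: "hIII da dg x0 = x0" using r1 H by (auto simp: hIII_def)
              have hvj: "hIII da dg x3 = x3 - 3*da" using r4 H by (auto simp: hIII_def)
              have tm: "Tm (2*da - dg) da (x0) = (x0) + (2*da - dg) - da" by (rule TmB; use r0 r1 r2 r3 r4 r5 H E in linarith)
              have eq: "hIII da dg x3 = Tm (2*da - dg) da (hIII da dg x0)" unfolding hv0 hvj tm using H E r0 r1 r2 r3 r4 r5 by argo
              show ?thesis using eq r0 r1 r2 r3 r4 r5 by simp
            next
              case 3 note r5 = this
              have False using H E r0 r1 r2 r3 r4 r5 by linarith
              then show ?thesis by simp
            qed
          next
            case 2 note r4 = this
            have False using H E r0 r1 r2 r3 r4 by linarith
            then show ?thesis by simp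
          next
            case 3 note r4 = this
            have False using H E r0 r1 r2 r3 r4 by linarith
            then show ?thesis by simp
          qed
        next
          case 3 note r3 = this
          have hv0: "hIII da dg x0 = x0" using r1 H by (auto simp: hIII_def)
          have hvj: "hIII da dg x1 = x1" using r2 H by (auto simp: hIII_def)
          have tm: "Tm (2*da - dg) da (x0) = (x0) + (2*da - dg) - da" by (rule TmB; use r0 r1 r2 r3 H E in linarith)
          have eq: "hIII da dg x1 = Tm (2*da - dg) da (hIII da dg x0)" unfolding hv0 hvj tm using H E r0 r1 r2 r3 by argo
          show ?thesis using eq r0 r1 r2 r3 by simp
        qed
      qed
    qed
  qed
qed

lemma K2_III:
  fixes da dg xp x0 x1 :: real
  assumes H: "0 \<le> da" "da \<le> dg" "dg < 2*da"
    and G: "gen da dg xp" "gen da dg x0" "gen da dg x1"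
    and E: "x0 = Tm da dg xp" "x1 = Tm da dg x0"
    and K: "Lt da dg xp = Lt da dg x1"
  shows "Lt da dg x0 = sigIII (Lt (2*da - dg) da (hIII da dg x0)) \<and> gen (2*da - dg) da (hIII da dg x0)"
proof -
  have dg0: "0 \<le> dg" using H by linarith
  show ?thesis
  proof (cases rule: reg3[OF G(1) H(1) dg0])
    case 1 note r0 = this
    show ?thesis
    proof (cases rule: reg3[OF G(2) H(1) dg0])
      case 1 note r1 = this
      have False using H E r0 r1 by linarith
      then show ?thesis by simp
    next
      case 2 note r1 = this
      show ?thesis
      proof (cases rule: reg3[OF G(3) H(1) dg0])
        case 1 note r2 = this
        have hv0: "hIII da dg x0 = x0 + 3*da" using r1 H by (auto simp: hIII_def)
        have lt: "Lt (2*da - dg) da (x0 + 3*da) = A" by (rule LtA; use r0 r1 r2 H E in linarith)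
        have gn: "gen (2*da - dg) da (x0 + 3*da)" by (rule gen_intro; use r0 r1 r2 H E in linarith)
        show ?thesis unfolding hv0 lt using gn r1 by (simp add: sigIII_def)
      next
        case 2 note r2 = this
        have False using H E r0 r1 r2 by linarith
        then show ?thesis by simp
      next
        case 3 note r2 = this
        show ?thesis using K r0 r1 r2 by simp
      qed
    next
      case 3 note r1 = this
      have False using H E r0 r1 by linarith
      then show ?thesis by simp
    qed
  next
    case 2 note r0 = this
    show ?thesis
    proof (cases rule: reg3[OF G(2) H(1) dg0])
      case 1 note r1 = this
      show ?thesis
      proof (cases rule: reg3[OF G(3) H(1) dg0])
        case 1 note r2 = this
        have False using H E r0 r1 r2 by linarith
        then show ?thesis by simp
      next
        case 2 note r2 = this
        have hv0: "hIII da dg x0 = x0 - 3*da" using r1 H by (auto simp: hIII_def)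
        have lt: "Lt (2*da - dg) da (x0 - 3*da) = C" by (rule LtC; use r0 r1 r2 H E in linarith)
        have gn: "gen (2*da - dg) da (x0 - 3*da)" by (rule gen_intro; use r0 r1 r2 H E in linarith)
        show ?thesis unfolding hv0 lt using gn r1 by (simp add: sigIII_def)
      next
        case 3 note r2 = this
        have False using H E r0 r1 r2 by linarith
        then show ?thesis by simp
      qed
    next
      case 2 note r1 = this
      have False using H E r0 r1 by linarith
      then show ?thesis by simp
    next
      case 3 note r1 = this
      show ?thesis
      proof (cases rule: reg3[OF G(3) H(1) dg0])
        case 1 note r2 = this
        have False using H E r0 r1 r2 by linarith
        then show ?thesis by simp
      next
        case 2 note r2 = this
        have False using H E r0 r1 r2 by linarith
        then show ?thesis by simp
      next
        case 3 note r2 = this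
        show ?thesis using K r0 r1 r2 by simp
      qed
    qed
  next
    case 3 note r0 = this
    show ?thesis
    proof (cases rule: reg3[OF G(2) H(1) dg0])
      case 1 note r1 = this
      have False using H E r0 r1 by linarith
      then show ?thesis by simp
    next
      case 2 note r1 = this
      show ?thesis
      proof (cases rule: reg3[OF G(3) H(1) dg0])
        case 1 note r2 = this
        show ?thesis using K r0 r1 r2 by simp
      next
        case 2 note r2 = this
        have False using H E r0 r1 r2 by linarith
        then show ?thesis by simp
      next
        case 3 note r2 = this
        have False using H E r0 r1 r2 by linarith
        then show ?thesis by simp
      qed
    next
      case 3 note r1 = this
      show ?thesis
      proof (cases rule: reg3[OF G(3) H(1) dg0])
        case 1 note r2 = this
        have False using H E r0 r1 r2 by linarith
        then show ?thesis by simp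
      next
        case 2 note r2 = this
        show ?thesis using K r0 r1 r2 by simp
      next
        case 3 note r2 = this
        have hv0: "hIII da dg x0 = x0" using r1 H by (auto simp: hIII_def)
        have lt: "Lt (2*da - dg) da (x0) = B" by (rule LtB; use r0 r1 r2 H E in linarith)
        have gn: "gen (2*da - dg) da (x0)" by (rule gen_intro; use r0 r1 r2 H E in linarith)
        show ?thesis unfolding hv0 lt using gn r1 by (simp add: sigIII_def)
      qed
    qed
  qed
qed

lemma K3_III:
  fixes da dg xp x0 x1 x2 x3 x4 x5 :: real
  assumes H: "0 \<le> da" "da \<le> dg" "dg < 2*da"
    and G: "gen da dg xp" "gen da dg x0" "gen da dg x1" "gen da dg x2" "gen da dg x3" "gen da dg x4" "gen da dg x5"
    and E: "x0 = Tm da dg xp" "x1 = Tm da dg x0" "x2 = Tm da dg x1" "x3 = Tm da dg x2" "x4 = Tm da dg x3" "x5 = Tm da dg x4"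
  shows "Lt da dg xp = Lt da dg x1 \<or> Lt da dg x0 = Lt da dg x2 \<or> Lt da dg x1 = Lt da dg x3 \<or> Lt da dg x2 = Lt da dg x4 \<or> Lt da dg x3 = Lt da dg x5"
proof -
  have dg0: "0 \<le> dg" using H by linarith
  show ?thesis
  proof (cases rule: reg3[OF G(1) H(1) dg0])
    case 1 note r0 = this
    show ?thesis
    proof (cases rule: reg3[OF G(2) H(1) dg0])
      case 1 note r1 = this
      have False using H E r0 r1 by linarith
      then show ?thesis by simp
    next
      case 2 note r1 = this
      show ?thesis
      proof (cases rule: reg3[OF G(3) H(1) dg0])
        case 1 note r2 = this
        show ?thesis using r0 r1 r2 by simp
      next
        case 2 note r2 = this
        have False using H E r0 r1 r2 by linarith
        then show ?thesis by simp
      next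
        case 3 note r2 = this
        show ?thesis
        proof (cases rule: reg3[OF G(4) H(1) dg0])
          case 1 note r3 = this
          have False using H E r0 r1 r2 r3 by linarith
          then show ?thesis by simp
        next
          case 2 note r3 = this
          have False using H E r0 r1 r2 r3 by linarith
          then show ?thesis by simp
        next
          case 3 note r3 = this
          show ?thesis
          proof (cases rule: reg3[OF G(5) H(1) dg0])
            case 1 note r4 = this
            have False using H E r0 r1 r2 r3 r4 by linarith
            then show ?thesis by simp
          next
            case 2 note r4 = this
            have False using H E r0 r1 r2 r3 r4 by linarith
            then show ?thesis by simp
          next
            case 3 note r4 = this
            show ?thesis using r0 r1 r2 r3 r4 by simp
          qed
        qed
      qed
    next
      case 3 note r1 = this
      have False using H E r0 r1 by linarith
      then show ?thesis by simp
    qed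
  next
    case 2 note r0 = this
    show ?thesis
    proof (cases rule: reg3[OF G(2) H(1) dg0])
      case 1 note r1 = this
      show ?thesis
      proof (cases rule: reg3[OF G(3) H(1) dg0])
        case 1 note r2 = this
        have False using H E r0 r1 r2 by linarith
        then show ?thesis by simp
      next
        case 2 note r2 = this
        show ?thesis using r0 r1 r2 by simp
      next
        case 3 note r2 = this
        have False using H E r0 r1 r2 by linarith
        then show ?thesis by simp
      qed
    next
      case 2 note r1 = this
      have False using H E r0 r1 by linarith
      then show ?thesis by simp
    next
      case 3 note r1 = this
      show ?thesis
      proof (cases rule: reg3[OF G(3) H(1) dg0])
        case 1 note r2 = this
        have False using H E r0 r1 r2 by linarith
        then show ?thesis by simp
      next
        case 2 note r2 = this
        have False using H E r0 r1 r2 by linarith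
        then show ?thesis by simp
      next
        case 3 note r2 = this
        show ?thesis
        proof (cases rule: reg3[OF G(4) H(1) dg0])
          case 1 note r3 = this
          have False using H E r0 r1 r2 r3 by linarith
          then show ?thesis by simp
        next
          case 2 note r3 = this
          have False using H E r0 r1 r2 r3 by linarith
          then show ?thesis by simp
        next
          case 3 note r3 = this
          show ?thesis using r0 r1 r2 r3 by simp
        qed
      qed
    qed
  next
    case 3 note r0 = this
    show ?thesis
    proof (cases rule: reg3[OF G(2) H(1) dg0])
      case 1 note r1 = this
      have False using H E r0 r1 by linarith
      then show ?thesis by simp
    next
      case 2 note r1 = this
      show ?thesis
      proof (cases rule: reg3[OF G(3) H(1) dg0])
        case 1 note r2 = this
        show ?thesis
        proof (cases rule: reg3[OF G(4) H(1) dg0])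
          case 1 note r3 = this
          have False using H E r0 r1 r2 r3 by linarith
          then show ?thesis by simp
        next
          case 2 note r3 = this
          show ?thesis using r0 r1 r2 r3 by simp
        next
          case 3 note r3 = this
          have False using H E r0 r1 r2 r3 by linarith
          then show ?thesis by simp
        qed
      next
        case 2 note r2 = this
        have False using H E r0 r1 r2 by linarith
        then show ?thesis by simp
      next
        case 3 note r2 = this
        have False using H E r0 r1 r2 by linarith
        then show ?thesis by simp
      qed
    next
      case 3 note r1 = this
      show ?thesis
      proof (cases rule: reg3[OF G(3) H(1) dg0])
        case 1 note r2 = this
        have False using H E r0 r1 r2 by linarith
        then show ?thesis by simp
      next
        case 2 note r2 = this
        show ?thesis
        proof (cases rule: reg3[OF G(4) H(1) dg0])
          case 1 note r3 = this
          show ?thesis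
          proof (cases rule: reg3[OF G(5) H(1) dg0])
            case 1 note r4 = this
            have False using H E r0 r1 r2 r3 r4 by linarith
            then show ?thesis by simp
          next
            case 2 note r4 = this
            show ?thesis using r0 r1 r2 r3 r4 by simp
          next
            case 3 note r4 = this
            have False using H E r0 r1 r2 r3 r4 by linarith
            then show ?thesis by simp
          qed
        next
          case 2 note r3 = this
          have False using H E r0 r1 r2 r3 by linarith
          then show ?thesis by simp
        next
          case 3 note r3 = this
          have False using H E r0 r1 r2 r3 by linarith
          then show ?thesis by simp
        qed
      next
        case 3 note r2 = this
        show ?thesis using r0 r1 r2 by simp
      qed
    qed
  qed
qed


section \<open>Abstract subsequence machinery\<close>

lemma consec_succ_ex:
  assumes U: "\<forall>n. \<exists>m\<in>S. n < m" and n: "n \<in> S"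
  shows "\<exists>m. consec S n m"
proof -
  obtain m0 where m0: "m0 \<in> S" "n < m0" using U by blast
  define F where "F = {m\<in>S. n < m \<and> m \<le> m0}"
  have fin: "finite F" unfolding F_def by (rule finite_subset[of _ "{n<..m0}"]) auto
  have ne: "F \<noteq> {}" using m0 unfolding F_def by auto
  define m where "m = Min F"
  have mF: "m \<in> F" unfolding m_def using fin ne by simp
  have "consec S n m" unfolding consec_def
  proof (intro conjI ballI)
    show "n \<in> S" by fact
    show "m \<in> S" "n < m" using mF unfolding F_def by auto
    fix j assume j: "j \<in> S"
    show "\<not> (n < j \<and> j < m)"
    proof
      assume "n < j \<and> j < m"
      then have "j \<in> F" using j mF unfolding F_def by auto
      then have "m \<le> j" unfolding m_def using fin by simp
      with \<open>n < j \<and> j < m\<close> show False by simp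
    qed
  qed
  then show ?thesis by blast
qed

lemma consec_pred_ex:
  assumes U: "\<forall>n. \<exists>m\<in>S. m < n" and n: "n \<in> S"
  shows "\<exists>a. consec S a n"
proof -
  obtain m0 where m0: "m0 \<in> S" "m0 < n" using U by blast
  define F where "F = {m\<in>S. m < n \<and> m0 \<le> m}"
  have fin: "finite F" unfolding F_def by (rule finite_subset[of _ "{m0..<n}"]) auto
  have ne: "F \<noteq> {}" using m0 unfolding F_def by auto
  define m where "m = Max F"
  have mF: "m \<in> F" unfolding m_def using fin ne by simp
  have "consec S m n" unfolding consec_def
  proof (intro conjI ballI)
    show "n \<in> S" by fact
    show "m \<in> S" "m < n" using mF unfolding F_def by auto
    fix j assume j: "j \<in> S"
    show "\<not> (m < j \<and> j < n)"
    proof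
      assume "m < j \<and> j < n"
      then have "j \<in> F" using j mF unfolding F_def by auto
      then have "j \<le> m" unfolding m_def using fin by simp
      with \<open>m < j \<and> j < n\<close> show False by simp
    qed
  qed
  then show ?thesis by blast
qed

lemma consec_unique_r: "consec S n m \<Longrightarrow> consec S n m' \<Longrightarrow> m = m'"
  unfolding consec_def by (meson linorder_neqE_linordered_idom)

lemma consec_unique_l: "consec S a n \<Longrightarrow> consec S a' n \<Longrightarrow> a = a'"
  unfolding consec_def by (meson linorder_neqE_linordered_idom)

definition nx :: "int set \<Rightarrow> int \<Rightarrow> int" where "nx S n = (THE m. consec S n m)"
definition pv :: "int set \<Rightarrow> int \<Rightarrow> int" where "pv S n = (THE a. consec S a n)"

definition unb :: "int set \<Rightarrow> bool" where
  "unb S \<longleftrightarrow> (\<forall>n. \<exists>m\<in>S. n < m) \<and> (\<forall>n. \<exists>m\<in>S. m < n)"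

lemma consec_nx: "unb S \<Longrightarrow> n \<in> S \<Longrightarrow> consec S n (nx S n)"
  unfolding nx_def unb_def by (metis consec_succ_ex consec_unique_r theI)

lemma consec_pv: "unb S \<Longrightarrow> n \<in> S \<Longrightarrow> consec S (pv S n) n"
  unfolding pv_def unb_def by (metis consec_pred_ex consec_unique_l theI)

lemma nx_eq: "consec S n m \<Longrightarrow> nx S n = m"
  unfolding nx_def using consec_unique_r by blast

lemma pv_eq: "consec S a n \<Longrightarrow> pv S n = a"
  unfolding pv_def using consec_unique_l by blast

lemma consec_mem: "consec S n m \<Longrightarrow> n \<in> S \<and> m \<in> S \<and> n < m"
  unfolding consec_def by auto

lemma nxs_props:
  assumes "unb S" "n \<in> S"
  shows "(nx S ^^ i) n \<in> S \<and> consec S ((nx S ^^ i) n) ((nx S ^^ Suc i) n)"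
proof (induction i)
  case 0 then show ?case using consec_nx[OF assms] assms(2) by simp
next
  case (Suc i)
  then have m: "(nx S ^^ Suc i) n \<in> S" using consec_mem by blast
  show ?case using m consec_nx[OF assms(1) m] by simp
qed

lemma nxs_mono:
  assumes "unb S" "n \<in> S" "i < j"
  shows "(nx S ^^ i) n < (nx S ^^ j) n"
  using assms(3)
proof (induction j)
  case 0 then show ?case by simp
next
  case (Suc j)
  have "(nx S ^^ j) n < (nx S ^^ Suc j) n" using nxs_props[OF assms(1,2), of j] consec_mem by blast
  with Suc show ?case by (cases "i = j") auto
qed

lemma nxs_between:
  assumes "unb S" "n \<in> S" "m \<in> S" "n < m" "m < (nx S ^^ j) n"
  shows "\<exists>i. 0 < i \<and> i < j \<and> m = (nx S ^^ i) n"
  using assms(5)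
proof (induction j)
  case 0 then show ?case using assms(4) by simp
next
  case (Suc j)
  have c: "consec S ((nx S ^^ j) n) ((nx S ^^ Suc j) n)" using nxs_props[OF assms(1,2)] by blast
  show ?case
  proof (cases "m < (nx S ^^ j) n")
    case True then show ?thesis using Suc by (meson less_SucI)
  next
    case False
    then have "m = (nx S ^^ j) n" using c Suc.prems assms(3) unfolding consec_def by force
    then show ?thesis using assms(4) by (cases j) auto
  qed
qed

lemma pv_nx: "unb S \<Longrightarrow> n \<in> S \<Longrightarrow> pv S (nx S n) = n"
  using consec_nx pv_eq by blast

lemma nx_pv: "unb S \<Longrightarrow> n \<in> S \<Longrightarrow> nx S (pv S n) = n"
  using consec_pv nx_eq by blast

lemma pvs_mem: "unb S \<Longrightarrow> n \<in> S \<Longrightarrow> (pv S ^^ k) n \<in> S"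
  by (induction k) (auto dest: consec_pv consec_mem)

lemma nxs_pvs: "unb S \<Longrightarrow> n \<in> S \<Longrightarrow> (nx S ^^ k) ((pv S ^^ k) n) = n"
proof (induction k arbitrary: n)
  case 0 then show ?case by simp
next
  case (Suc k)
  have m: "pv S n \<in> S" using consec_pv[OF Suc.prems] consec_mem by blast
  have "(nx S ^^ Suc k) ((pv S ^^ Suc k) n) = nx S ((nx S ^^ k) ((pv S ^^ k) (pv S n)))"
    by (simp add: funpow_swap1)
  also have "\<dots> = nx S (pv S n)" using Suc.IH[OF Suc.prems(1) m] by simp
  also have "\<dots> = n" using nx_pv Suc.prems by blast
  finally show ?case .
qed



section \<open>Good codings\<close>

definition Good :: "int set \<Rightarrow> real \<Rightarrow> real \<Rightarrow> (int \<Rightarrow> real) \<Rightarrow> (int \<Rightarrow> lbl) \<Rightarrow> (lbl \<Rightarrow> lbl) \<Rightarrow> bool" where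
  "Good S da dg y c \<pi> \<longleftrightarrow> 0 \<le> da \<and> 0 \<le> dg \<and> 0 < da + dg \<and> inj \<pi> \<and>
     (\<forall>n\<in>S. gen da dg (y n) \<and> c n = \<pi> (Lt da dg (y n))) \<and>
     (\<forall>n m. consec S n m \<longrightarrow> y m = Tm da dg (y n)) \<and> unb S"

lemma trip_ex:
  assumes "x \<noteq> y" "y \<noteq> z" "x \<noteq> z"
  shows "\<exists>k<6. trans_diag k = (x,y,z)"
proof -
  have "(x,y,z) = trans_diag 0 \<or> (x,y,z) = trans_diag 1 \<or> (x,y,z) = trans_diag 2 \<or>
        (x,y,z) = trans_diag 3 \<or> (x,y,z) = trans_diag 4 \<or> (x,y,z) = trans_diag 5"
    using assms by (cases x; cases y; cases z) (simp_all add: numeral_eq_Suc)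
  then show ?thesis
  proof (elim disjE)
    assume h: "(x,y,z) = trans_diag 0" show ?thesis by (rule exI[of _ 0]) (use h in simp)
  next
    assume h: "(x,y,z) = trans_diag 1" show ?thesis by (rule exI[of _ 1]) (use h in simp)
  next
    assume h: "(x,y,z) = trans_diag 2" show ?thesis by (rule exI[of _ 2]) (use h in simp)
  next
    assume h: "(x,y,z) = trans_diag 3" show ?thesis by (rule exI[of _ 3]) (use h in simp)
  next
    assume h: "(x,y,z) = trans_diag 4" show ?thesis by (rule exI[of _ 4]) (use h in simp)
  next
    assume h: "(x,y,z) = trans_diag 5" show ?thesis by (rule exI[of _ 5]) (use h in simp)
  qed
qed

lemma trans_diag_distinct:
  assumes "k < 6"
  shows "\<exists>x y z. trans_diag k = (x,y,z) \<and> x \<noteq> y \<and> y \<noteq> z \<and> x \<noteq> z"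
proof -
  have "k \<in> {0,1,2,3,4,5}" using assms by auto
  then show ?thesis by (auto simp: numeral_eq_Suc)
qed

lemma perm_arrows:
  assumes "inj \<pi>" "k < 6"
  shows "\<exists>k'<6. \<forall>a b. (a,b) \<in> diag_arrows (trans_diag k) \<longrightarrow> (\<pi> a, \<pi> b) \<in> diag_arrows (trans_diag k')"
proof -
  obtain x y z where t: "trans_diag k = (x,y,z)" "x \<noteq> y" "y \<noteq> z" "x \<noteq> z"
    using trans_diag_distinct[OF assms(2)] by blast
  have "\<pi> x \<noteq> \<pi> y" "\<pi> y \<noteq> \<pi> z" "\<pi> x \<noteq> \<pi> z" using t assms(1) by (auto dest: injD)
  then obtain k' where k': "k' < 6" "trans_diag k' = (\<pi> x, \<pi> y, \<pi> z)" using trip_ex by blast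
  show ?thesis
    by (rule exI[of _ k']) (auto simp: k' t diag_arrows_def)
qed

lemma arrows_base:
  assumes "gen da dg x" "gen da dg (Tm da dg x)" "0 \<le> da" "0 \<le> dg"
  shows "(Lt da dg x, Lt da dg (Tm da dg x)) \<in> diag_arrows (trans_diag (if da \<le> dg then 0 else 1))"
proof -
  have d0: "diag_arrows (trans_diag 0) = {(A,C),(C,A),(C,B),(B,C),(B,B)}" by (simp add: diag_arrows_def)
  have d1: "diag_arrows (trans_diag 1) = {(C,A),(A,C),(A,B),(B,A),(B,B)}" by (simp add: diag_arrows_def)
  show ?thesis
  proof (cases rule: reg3[OF assms(1,3,4)])
    case 1 note r = this
    show ?thesis
      by (cases rule: reg3[OF assms(2,3,4)]; use r assms(3,4) in \<open>(auto simp: diag_arrows_def split: if_splits; linarith)\<close>)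
  next
    case 2 note r = this
    show ?thesis
      by (cases rule: reg3[OF assms(2,3,4)]; use r assms(3,4) in \<open>(auto simp: diag_arrows_def split: if_splits; linarith)\<close>)
  next
    case 3 note r = this
    show ?thesis
      by (cases rule: reg3[OF assms(2,3,4)]; use r assms(3,4) in \<open>(auto simp: diag_arrows_def split: if_splits; linarith)\<close>)
  qed
qed

lemma good_adm:
  assumes "Good S da dg y c \<pi>"
  shows "admissible c S"
proof -
  define k0 where "k0 = (if da \<le> dg then 0 else (1::nat))"
  have G: "0 \<le> da" "0 \<le> dg" "inj \<pi>" "\<forall>n\<in>S. gen da dg (y n) \<and> c n = \<pi> (Lt da dg (y n))"
    "\<forall>n m. consec S n m \<longrightarrow> y m = Tm da dg (y n)" using assms unfolding Good_def by auto
  have k06: "k0 < 6" by (simp add: k0_def)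
  obtain k' where k': "k' < 6" "\<forall>a b. (a,b) \<in> diag_arrows (trans_diag k0) \<longrightarrow> (\<pi> a, \<pi> b) \<in> diag_arrows (trans_diag k')"
    using perm_arrows[OF G(3) k06] by blast
  show ?thesis unfolding admissible_def
  proof (intro exI[of _ k'] conjI allI impI)
    show "k' < 6" by fact
    fix n m assume cm: "consec S n m"
    then have nm: "n \<in> S" "m \<in> S" using consec_mem by auto
    have ym: "y m = Tm da dg (y n)" using G(5) cm by auto
    have "(Lt da dg (y n), Lt da dg (y m)) \<in> diag_arrows (trans_diag k0)"
      using arrows_base[of da dg "y n"] G nm ym unfolding k0_def by auto
    then show "(c n, c m) \<in> diag_arrows (trans_diag k')" using k'(2) G(4) nm by auto
  qed
qed

definition swAC :: "lbl \<Rightarrow> lbl" where "swAC l = (case l of A \<Rightarrow> C | B \<Rightarrow> B | C \<Rightarrow> A)"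

lemma swAC_swAC[simp]: "swAC (swAC l) = l" by (cases l) (auto simp: swAC_def)
lemma inj_swAC: "inj swAC" by (metis injI swAC_swAC)

lemma flip_Lt: "0 \<le> da \<Longrightarrow> 0 \<le> dg \<Longrightarrow> Lt dg da (-x) = swAC (Lt da dg x)"
  by (auto simp: Lt_def swAC_def)
lemma flip_Tm: "0 \<le> da \<Longrightarrow> 0 \<le> dg \<Longrightarrow> Tm dg da (-x) = - Tm da dg x"
  by (auto simp: Tm_def)
lemma flip_gen: "gen dg da (-x) = gen da dg x"
  by (auto simp: gen_def)

lemma good_flip:
  assumes "Good S da dg y c \<pi>"
  shows "Good S dg da (\<lambda>n. - y n) c (\<pi> \<circ> swAC)"
  using assms unfolding Good_def
  by (auto simp: flip_Lt flip_Tm flip_gen inj_swAC inj_compose)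



section \<open>One derivation step\<close>

lemma good_facts:
  assumes "Good S da dg y c \<pi>"
  shows "0 \<le> da" "0 \<le> dg" "0 < da + dg" "inj \<pi>" "unb S"
    "\<And>n. n \<in> S \<Longrightarrow> gen da dg (y n)" "\<And>n. n \<in> S \<Longrightarrow> c n = \<pi> (Lt da dg (y n))"
    "\<And>n m. consec S n m \<Longrightarrow> y m = Tm da dg (y n)"
  using assms unfolding Good_def by auto

lemma derived_sub: "derived c S \<subseteq> S" unfolding derived_def by auto

lemma kept_iff:
  assumes G: "Good S da dg y c \<pi>" and n: "n \<in> S"
  shows "n \<in> derived c S \<longleftrightarrow> Lt da dg (y (pv S n)) = Lt da dg (y (nx S n))"
proof -
  note F = good_facts[OF G]
  have cp: "consec S (pv S n) n" and cn: "consec S n (nx S n)"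
    using consec_pv[OF F(5) n] consec_nx[OF F(5) n] by auto
  have pS: "pv S n \<in> S" and nS: "nx S n \<in> S" using cp cn consec_mem by auto
  have "n \<in> derived c S \<longleftrightarrow> c (pv S n) = c (nx S n)"
  proof
    assume "n \<in> derived c S"
    then obtain a b where ab: "consec S a n" "consec S n b" "c a = c b"
      unfolding derived_def sandwiched_def by auto
    have "a = pv S n" using pv_eq[OF ab(1)] by simp
    moreover have "b = nx S n" using nx_eq[OF ab(2)] by simp
    ultimately show "c (pv S n) = c (nx S n)" using ab(3) by simp
  next
    assume "c (pv S n) = c (nx S n)"
    then show "n \<in> derived c S" unfolding derived_def sandwiched_def using n cp cn by blast
  qed
  also have "\<dots> \<longleftrightarrow> Lt da dg (y (pv S n)) = Lt da dg (y (nx S n))"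
    using F(7)[OF pS] F(7)[OF nS] F(4) by (auto dest: injD)
  finally show ?thesis .
qed

lemma kept_iff_nxs:
  assumes G: "Good S da dg y c \<pi>" and n: "n \<in> S" and i: "0 < i"
  shows "(nx S ^^ i) n \<in> derived c S \<longleftrightarrow>
    Lt da dg (y ((nx S ^^ (i - 1)) n)) = Lt da dg (y ((nx S ^^ Suc i) n))"
proof -
  note F = good_facts[OF G]
  obtain j where j: "i = Suc j" using i by (cases i) auto
  have c1: "consec S ((nx S ^^ j) n) ((nx S ^^ i) n)" using nxs_props[OF F(5) n, of j] j by simp
  have mS: "(nx S ^^ i) n \<in> S" using nxs_props[OF F(5) n] by blast
  have "pv S ((nx S ^^ i) n) = (nx S ^^ (i - 1)) n" using pv_eq[OF c1] j by simp
  moreover have "nx S ((nx S ^^ i) n) = (nx S ^^ Suc i) n" by simp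
  ultimately show ?thesis using kept_iff[OF G mS] by simp
qed

lemma step_generic:
  assumes Gd: "Good S da dg y c \<pi>"
   and P: "0 \<le> daN" "0 \<le> dgN" "0 < daN + dgN" "inj \<sigma>"
   and K1: "\<And>xp x0 x1 x2 x3 x4 x5 x6. gen da dg xp \<Longrightarrow> gen da dg x0 \<Longrightarrow> gen da dg x1 \<Longrightarrow> gen da dg x2
      \<Longrightarrow> gen da dg x3 \<Longrightarrow> gen da dg x4 \<Longrightarrow> gen da dg x5 \<Longrightarrow> gen da dg x6
      \<Longrightarrow> x0 = Tm da dg xp \<Longrightarrow> x1 = Tm da dg x0 \<Longrightarrow> x2 = Tm da dg x1 \<Longrightarrow> x3 = Tm da dg x2
      \<Longrightarrow> x4 = Tm da dg x3 \<Longrightarrow> x5 = Tm da dg x4 \<Longrightarrow> x6 = Tm da dg x5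
      \<Longrightarrow> Lt da dg xp = Lt da dg x1 \<Longrightarrow>
      (Lt da dg x0 = Lt da dg x2 \<and> h x1 = Tm daN dgN (h x0)) \<or>
      (Lt da dg x0 \<noteq> Lt da dg x2 \<and> Lt da dg x1 = Lt da dg x3 \<and> h x2 = Tm daN dgN (h x0)) \<or>
      (Lt da dg x0 \<noteq> Lt da dg x2 \<and> Lt da dg x1 \<noteq> Lt da dg x3 \<and> Lt da dg x2 = Lt da dg x4 \<and> h x3 = Tm daN dgN (h x0)) \<or>
      (Lt da dg x0 \<noteq> Lt da dg x2 \<and> Lt da dg x1 \<noteq> Lt da dg x3 \<and> Lt da dg x2 \<noteq> Lt da dg x4 \<and> Lt da dg x3 = Lt da dg x5 \<and> h x4 = Tm daN dgN (h x0)) \<or>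
      (Lt da dg x0 \<noteq> Lt da dg x2 \<and> Lt da dg x1 \<noteq> Lt da dg x3 \<and> Lt da dg x2 \<noteq> Lt da dg x4 \<and> Lt da dg x3 \<noteq> Lt da dg x5 \<and> Lt da dg x4 = Lt da dg x6 \<and> h x5 = Tm daN dgN (h x0))"
   and K2: "\<And>xp x0 x1. gen da dg xp \<Longrightarrow> gen da dg x0 \<Longrightarrow> gen da dg x1
      \<Longrightarrow> x0 = Tm da dg xp \<Longrightarrow> x1 = Tm da dg x0 \<Longrightarrow> Lt da dg xp = Lt da dg x1 \<Longrightarrow>
      Lt da dg x0 = \<sigma> (Lt daN dgN (h x0)) \<and> gen daN dgN (h x0)"
   and K3: "\<And>xp x0 x1 x2 x3 x4 x5. gen da dg xp \<Longrightarrow> gen da dg x0 \<Longrightarrow> gen da dg x1 \<Longrightarrow> gen da dg x2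
      \<Longrightarrow> gen da dg x3 \<Longrightarrow> gen da dg x4 \<Longrightarrow> gen da dg x5
      \<Longrightarrow> x0 = Tm da dg xp \<Longrightarrow> x1 = Tm da dg x0 \<Longrightarrow> x2 = Tm da dg x1 \<Longrightarrow> x3 = Tm da dg x2
      \<Longrightarrow> x4 = Tm da dg x3 \<Longrightarrow> x5 = Tm da dg x4 \<Longrightarrow>
      Lt da dg xp = Lt da dg x1 \<or> Lt da dg x0 = Lt da dg x2 \<or> Lt da dg x1 = Lt da dg x3 \<or>
      Lt da dg x2 = Lt da dg x4 \<or> Lt da dg x3 = Lt da dg x5"
  shows "Good (derived c S) daN dgN (\<lambda>n. h (y n)) c (\<pi> \<circ> \<sigma>)"
proof -
  note F = good_facts[OF Gd]
  define S' where "S' = derived c S"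
  have S'S: "S' \<subseteq> S" unfolding S'_def by (rule derived_sub)
  let ?N = "\<lambda>n i. (nx S ^^ i) n"
  have NS: "\<And>n i. n \<in> S \<Longrightarrow> ?N n i \<in> S" using nxs_props[OF F(5)] by blast
  have NT: "\<And>n i. n \<in> S \<Longrightarrow> y (?N n (Suc i)) = Tm da dg (y (?N n i))"
    using nxs_props[OF F(5)] F(8) by blast
  have Ng: "\<And>n i. n \<in> S \<Longrightarrow> gen da dg (y (?N n i))" using NS F(6) by blast
  have pS: "\<And>n. n \<in> S \<Longrightarrow> pv S n \<in> S" using consec_pv[OF F(5)] consec_mem by blast
  have pT: "\<And>n. n \<in> S \<Longrightarrow> y n = Tm da dg (y (pv S n))" using consec_pv[OF F(5)] F(8) by blast
  have kept0: "\<And>n. n \<in> S \<Longrightarrow> n \<in> S' \<longleftrightarrow> Lt da dg (y (pv S n)) = Lt da dg (y (?N n 1))"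
    unfolding S'_def using kept_iff[OF Gd] by simp
  have keptI: "\<And>n i. n \<in> S \<Longrightarrow> 0 < i \<Longrightarrow> ?N n i \<in> S' \<longleftrightarrow>
      Lt da dg (y (?N n (i - 1))) = Lt da dg (y (?N n (Suc i)))"
    unfolding S'_def using kept_iff_nxs[OF Gd] by blast
  have succ: "\<exists>j. consec S' n (?N n j) \<and> h (y (?N n j)) = Tm daN dgN (h (y n))" if nS': "n \<in> S'" for n
  proof -
    have nS: "n \<in> S" using nS' S'S by auto
    have N0: "?N n 0 = n" by simp
    have kk: "Lt da dg (y (pv S n)) = Lt da dg (y (?N n 1))" using kept0[OF nS] nS' by simp
    have E0: "y (?N n 0) = Tm da dg (y (pv S n))" using pT[OF nS] by simp
    note D1 = K1[OF F(6)[OF pS[OF nS]] Ng[OF nS, of 0] Ng[OF nS, of "Suc 0"] Ng[OF nS, of "Suc (Suc 0)"] Ng[OF nS, of "Suc (Suc (Suc 0))"]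
       Ng[OF nS, of "Suc (Suc (Suc (Suc 0)))"] Ng[OF nS, of "Suc (Suc (Suc (Suc (Suc 0))))"] Ng[OF nS, of "Suc (Suc (Suc (Suc (Suc (Suc 0)))))"] E0 NT[OF nS, of 0] NT[OF nS, of "Suc 0"] NT[OF nS, of "Suc (Suc 0)"]
       NT[OF nS, of "Suc (Suc (Suc 0))"] NT[OF nS, of "Suc (Suc (Suc (Suc 0)))"] NT[OF nS, of "Suc (Suc (Suc (Suc (Suc 0))))"]]
    have kk': "Lt da dg (y (pv S n)) = Lt da dg (y (?N n (Suc 0)))" using kk by simp
    have D: "\<exists>k. (\<forall>i. i < k \<longrightarrow> Lt da dg (y (?N n i)) \<noteq> Lt da dg (y (?N n (Suc (Suc i)))))
       \<and> Lt da dg (y (?N n k)) = Lt da dg (y (?N n (Suc (Suc k)))) \<and> h (y (?N n (Suc k))) = Tm daN dgN (h (y (?N n 0)))"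
      using D1[OF kk', simplified]
      apply (elim disjE)
          apply (rule exI[of _ 0]; simp (no_asm) add: less_Suc_eq numeral_eq_Suc; blast)
         apply (rule exI[of _ 1]; simp (no_asm) add: less_Suc_eq numeral_eq_Suc; blast)
        apply (rule exI[of _ 2]; simp (no_asm) add: less_Suc_eq numeral_eq_Suc; blast)
       apply (rule exI[of _ 3]; simp (no_asm) add: less_Suc_eq numeral_eq_Suc; blast)
      apply (rule exI[of _ 4]; simp (no_asm) add: less_Suc_eq numeral_eq_Suc; blast)
      done
    then obtain k where k: "\<forall>i. i < k \<longrightarrow> Lt da dg (y (?N n i)) \<noteq> Lt da dg (y (?N n (Suc (Suc i))))"
       "Lt da dg (y (?N n k)) = Lt da dg (y (?N n (Suc (Suc k))))" "h (y (?N n (Suc k))) = Tm daN dgN (h (y (?N n 0)))"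
      by blast
    define j where "j = Suc k"
    have j1: "0 < j" unfolding j_def by simp
    have jS': "?N n j \<in> S'" using keptI[OF nS j1] k(2) unfolding j_def by simp
    have lt: "n < ?N n j" using nxs_mono[OF F(5) nS j1] by simp
    have "consec S' n (?N n j)" unfolding consec_def
    proof (intro conjI ballI notI)
      show "n \<in> S'" "?N n j \<in> S'" "n < ?N n j" by fact+
      fix m assume mS': "m \<in> S'" and bt: "n < m \<and> m < ?N n j"
      have mS: "m \<in> S" using mS' S'S by auto
      obtain i where i: "0 < i" "i < j" "m = ?N n i" using nxs_between[OF F(5) nS mS] bt by blast
      have "Lt da dg (y (?N n (i - 1))) = Lt da dg (y (?N n (Suc i)))" using keptI[OF nS i(1)] mS' i(3) by simp
      moreover obtain i' where "i = Suc i'" using i(1) by (cases i) auto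
      ultimately show False using k(1) i(2) unfolding j_def by auto
    qed
    then show ?thesis using k(3) unfolding j_def by (intro exI[of _ "Suc k"]) simp
  qed
  have near: "\<exists>i\<le>4. ?N q i \<in> S'" if qS: "q \<in> S" for q
  proof -
    have E0: "y (?N q 0) = Tm da dg (y (pv S q))" using pT[OF qS] by simp
    note D1 = K3[OF F(6)[OF pS[OF qS]] Ng[OF qS, of 0] Ng[OF qS, of "Suc 0"] Ng[OF qS, of "Suc (Suc 0)"] Ng[OF qS, of "Suc (Suc (Suc 0))"]
       Ng[OF qS, of "Suc (Suc (Suc (Suc 0)))"] Ng[OF qS, of "Suc (Suc (Suc (Suc (Suc 0))))"] E0 NT[OF qS, of 0] NT[OF qS, of "Suc 0"] NT[OF qS, of "Suc (Suc 0)"]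
       NT[OF qS, of "Suc (Suc (Suc 0))"] NT[OF qS, of "Suc (Suc (Suc (Suc 0)))"]]
    have k1: "?N q 1 \<in> S' \<longleftrightarrow> Lt da dg (y (?N q 0)) = Lt da dg (y (?N q 2))"
      using keptI[OF qS, of 1] by (simp add: numeral_eq_Suc)
    have k2: "?N q 2 \<in> S' \<longleftrightarrow> Lt da dg (y (?N q 1)) = Lt da dg (y (?N q 3))"
      using keptI[OF qS, of 2] by (simp add: numeral_eq_Suc)
    have k3: "?N q 3 \<in> S' \<longleftrightarrow> Lt da dg (y (?N q 2)) = Lt da dg (y (?N q 4))"
      using keptI[OF qS, of 3] by (simp add: numeral_eq_Suc)
    have k4: "?N q 4 \<in> S' \<longleftrightarrow> Lt da dg (y (?N q 3)) = Lt da dg (y (?N q 5))"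
      using keptI[OF qS, of 4] by (simp add: numeral_eq_Suc)
    have k0: "?N q 0 \<in> S' \<longleftrightarrow> Lt da dg (y (pv S q)) = Lt da dg (y (?N q 1))"
      using kept0[OF qS] by simp
    from D1 show ?thesis
      apply (elim disjE)
      using k0 apply (intro exI[of _ 0]; simp add: numeral_eq_Suc)
      using k1 apply (intro exI[of _ 1]; simp add: numeral_eq_Suc)
      using k2 apply (intro exI[of _ 2]; simp add: numeral_eq_Suc)
      using k3 apply (intro exI[of _ 3]; simp add: numeral_eq_Suc)
      using k4 apply (intro exI[of _ 4]; simp add: numeral_eq_Suc)
      done
  qed
  have unbS': "unb S'" unfolding unb_def
  proof (intro conjI allI)
    fix N
    obtain q where q: "q \<in> S" "N < q" using F(5) unfolding unb_def by blast
    obtain i where i: "i \<le> 4" "?N q i \<in> S'" using near[OF q(1)] by blast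
    have "q \<le> ?N q i" using nxs_mono[OF F(5) q(1), of 0 i] by (cases "i = 0") auto
    then show "\<exists>m\<in>S'. N < m" using i q by (intro bexI[of _ "?N q i"]) auto
  next
    fix N
    obtain q0 where q0: "q0 \<in> S" "q0 < N" using F(5) unfolding unb_def by blast
    define q where "q = (pv S ^^ 4) q0"
    have qS: "q \<in> S" unfolding q_def using pvs_mem[OF F(5) q0(1)] .
    have q4: "?N q 4 = q0" unfolding q_def using nxs_pvs[OF F(5) q0(1)] .
    obtain i where i: "i \<le> 4" "?N q i \<in> S'" using near[OF qS] by blast
    have "?N q i \<le> ?N q 4" using nxs_mono[OF F(5) qS, of i 4] i(1) by (cases "i = 4") auto
    then show "\<exists>m\<in>S'. m < N" using i q4 q0 by (intro bexI[of _ "?N q i"]) auto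
  qed
  show ?thesis unfolding Good_def S'_def[symmetric]
  proof (intro conjI ballI allI impI)
    show "0 \<le> daN" "0 \<le> dgN" "0 < daN + dgN" by (fact P)+
    show "inj (\<pi> \<circ> \<sigma>)" using F(4) P(4) by (rule inj_compose)
    show "unb S'" by fact
  next
    fix n assume nS': "n \<in> S'"
    have nS: "n \<in> S" using nS' S'S by auto
    have kk: "Lt da dg (y (pv S n)) = Lt da dg (y (?N n 1))" using kept0[OF nS] nS' by simp
    have e1: "y (?N n (Suc 0)) = Tm da dg (y n)" using NT[OF nS, of 0] by simp
    have kk': "Lt da dg (y (pv S n)) = Lt da dg (y (?N n (Suc 0)))" using kk by simp
    have R2: "Lt da dg (y n) = \<sigma> (Lt daN dgN (h (y n))) \<and> gen daN dgN (h (y n))"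
      using K2[OF F(6)[OF pS[OF nS]] F(6)[OF nS] Ng[OF nS, of "Suc 0"] pT[OF nS] e1 kk'] .
    show "gen daN dgN (h (y n))" using R2 by simp
    show "c n = (\<pi> \<circ> \<sigma>) (Lt daN dgN (h (y n)))" using R2 F(7)[OF nS] by simp
  next
    fix n m assume cm: "consec S' n m"
    have nS': "n \<in> S'" using cm consec_mem by blast
    obtain j where j: "consec S' n (?N n j)" "h (y (?N n j)) = Tm daN dgN (h (y n))" using succ[OF nS'] by blast
    have "m = ?N n j" using consec_unique_r[OF cm j(1)] .
    then show "h (y m) = Tm daN dgN (h (y n))" using j(2) by simp
  qed
qed



section \<open>Iterating the derivation\<close>

lemma inj_sigI: "inj sigI" by (rule injI) (auto simp: sigI_def split: lbl.splits)
lemma inj_sigII: "inj sigII" by (rule injI) (auto simp: sigII_def split: lbl.splits)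
lemma inj_sigIII: "inj sigIII" by (rule injI) (auto simp: sigIII_def split: lbl.splits)

lemma step_le:
  assumes G: "Good S da dg y c \<pi>" and le: "da \<le> dg"
  shows "\<exists>da' dg' y' \<pi>'. Good (derived c S) da' dg' y' c \<pi>'"
proof -
  note F = good_facts[OF G]
  consider (I) "3*da \<le> dg" | (II) "2*da \<le> dg" "dg < 3*da" | (III) "dg < 2*da" by linarith
  then show ?thesis
  proof cases
    case I
    have "Good (derived c S) da (dg - 3*da) (\<lambda>n. hI da dg (y n)) c (\<pi> \<circ> sigI)"
      by (rule step_generic[OF G _ _ _ inj_sigI K1_I[OF F(1) I] K2_I[OF F(1) I] K3_I[OF F(1) I]])
        (use F I in linarith)+
    then show ?thesis by blast
  next
    case II
    have "Good (derived c S) (3*da - dg) (dg - 2*da) (\<lambda>n. hII da dg (y n)) c (\<pi> \<circ> sigII)"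
      by (rule step_generic[OF G _ _ _ inj_sigII K1_II[OF F(1) II] K2_II[OF F(1) II] K3_II[OF F(1) II]])
        (use F II in linarith)+
    then show ?thesis by blast
  next
    case III
    have "Good (derived c S) (2*da - dg) da (\<lambda>n. hIII da dg (y n)) c (\<pi> \<circ> sigIII)"
      by (rule step_generic[OF G _ _ _ inj_sigIII K1_III[OF F(1) le III] K2_III[OF F(1) le III] K3_III[OF F(1) le III]])
        (use F le III in linarith)+
    then show ?thesis by blast
  qed
qed

lemma good_step:
  assumes G: "Good S da dg y c \<pi>"
  shows "\<exists>da' dg' y' \<pi>'. Good (derived c S) da' dg' y' c \<pi>'"
proof (cases "da \<le> dg")
  case True then show ?thesis using step_le[OF G] by blast
next
  case False
  then show ?thesis using step_le[OF good_flip[OF G]] by simp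
qed

lemma good_iter:
  assumes G: "Good UNIV da dg y c \<pi>"
  shows "\<exists>da' dg' y' \<pi>'. Good ((derived c ^^ n) UNIV) da' dg' y' c \<pi>'"
proof (induction n)
  case 0 then show ?case using G by auto
next
  case (Suc n)
  then obtain da' dg' y' \<pi>' where "Good ((derived c ^^ n) UNIV) da' dg' y' c \<pi>'" by blast
  from good_step[OF this] show ?case by simp
qed

lemma good_infinitely_derivable:
  assumes G: "Good UNIV da dg y c \<pi>"
  shows "infinitely_derivable c"
  unfolding infinitely_derivable_def derivable_def
proof
  fix n
  obtain a1 b1 y1 p1 where g1: "Good ((derived c ^^ n) UNIV) a1 b1 y1 c p1" using good_iter[OF G] by blast
  obtain a2 b2 y2 p2 where g2: "Good ((derived c ^^ Suc n) UNIV) a2 b2 y2 c p2" using good_iter[OF G] by blast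
  show "admissible c ((derived c ^^ n) UNIV) \<and> admissible c (derived c ((derived c ^^ n) UNIV))"
    using good_adm[OF g1] good_adm[OF g2] by simp
qed



lemma Tm_Lt: "Lt da dg x = A \<Longrightarrow> Tm da dg x = x - da - 2*dg"
  "Lt da dg x = C \<Longrightarrow> Tm da dg x = x + 2*da + dg"
  "Lt da dg x = B \<Longrightarrow> Tm da dg x = x + da - dg"
  by (auto simp: Lt_def Tm_def split: if_splits)

lemma consec_UNIV: "consec UNIV n m \<Longrightarrow> m = n + 1"
  unfolding consec_def by (metis UNIV_I less_add_one linorder_neqE_linordered_idom zless_imp_add1_zle order_le_less)

lemma unb_UNIV: "unb (UNIV :: int set)"
  unfolding unb_def by (meson UNIV_I gt_ex lt_ex)

lemma geo_sector:
  assumes nm: "\<forall>t. \<not> MK (a0 + t*da) (g0 + t*dg)" and d: "0 \<le> da" "0 \<le> dg" "0 < da + dg"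
    and sm: "strict_mono (\<sigma> :: int \<Rightarrow> real)" and rg: "range \<sigma> = {t. \<exists>l. Ed l (a0 + t*da) (g0 + t*dg)}"
    and cn: "\<forall>n. Ed (c n) (a0 + \<sigma> n * da) (g0 + \<sigma> n * dg)"
  shows "\<exists>y. Good UNIV da dg y c id"
proof -
  have noA: "\<not> Ed A (a0 + t*da) (g0 + t*dg)" if da0: "da = 0" for t
  proof
    assume "Ed A (a0 + t*da) (g0 + t*dg)"
    then obtain i j :: int where "sd A (a0 + t*da - of_int i) (g0 + t*dg - of_int j)" unfolding Ed_def by blast
    then have "a0 = of_int (i+1) \<or> a0 = of_int (i - 1)" using da0 by auto
    then obtain k :: int where k: "a0 = of_int k" by blast
    have dgp: "0 < dg" using d da0 by simp
    define t' where "t' = (of_int (k+1) - g0) / dg"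
    have "g0 + t'*dg = of_int (k+1)" unfolding t'_def using dgp by simp
    moreover have "a0 + t'*da = of_int k" using k da0 by simp
    ultimately have "MK (a0 + t'*da) (g0 + t'*dg)" by (intro mk_intro[of _ k _ "k+1"]) auto
    then show False using nm by blast
  qed
  have noC: "\<not> Ed C (a0 + t*da) (g0 + t*dg)" if dg0: "dg = 0" for t
  proof
    assume "Ed C (a0 + t*da) (g0 + t*dg)"
    then obtain i j :: int where "sd C (a0 + t*da - of_int i) (g0 + t*dg - of_int j)" unfolding Ed_def by blast
    then have "g0 = of_int (j+1) \<or> g0 = of_int (j - 1)" using dg0 by auto
    then obtain k :: int where k: "g0 = of_int k" by blast
    have dap: "0 < da" using d dg0 by simp
    define t' where "t' = (of_int (k+1) - a0) / da"
    have "a0 + t'*da = of_int (k+1)" unfolding t'_def using dap by simp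
    moreover have "g0 + t'*dg = of_int k" using k dg0 by simp
    ultimately have "MK (a0 + t'*da) (g0 + t'*dg)" by (intro mk_intro[of _ "k+1" _ k]) auto
    then show False using nm by blast
  qed
  have pA: "0 < da" if cA: "c n = A" for n
  proof (rule ccontr)
    assume "\<not> 0 < da" then have "da = 0" using d by simp
    then show False using noA[of "\<sigma> n"] cn cA by metis
  qed
  have pC: "0 < dg" if cC: "c n = C" for n
  proof (rule ccontr)
    assume "\<not> 0 < dg" then have "dg = 0" using d by simp
    then show False using noC[of "\<sigma> n"] cn cC by metis
  qed
  have exP: "\<exists>P. 3 dvd (fst P - snd P) \<and> ExR (c n) (a0 + \<sigma> n * da) (g0 + \<sigma> n * dg) (fst P) (snd P)" for n
  proof -
    obtain i j where "3 dvd (i - j)" "ExR (c n) (a0 + \<sigma> n * da) (g0 + \<sigma> n * dg) i j"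
      using exit_ex[of "c n"] cn nm by blast
    then show ?thesis by (intro exI[of _ "(i,j)"]) simp
  qed
  define P where "P n = (SOME P. 3 dvd (fst P - snd P) \<and> ExR (c n) (a0 + \<sigma> n * da) (g0 + \<sigma> n * dg) (fst P) (snd P))" for n
  have Pp: "3 dvd (fst (P n) - snd (P n)) \<and> ExR (c n) (a0 + \<sigma> n * da) (g0 + \<sigma> n * dg) (fst (P n)) (snd (P n))" for n
    unfolding P_def using someI_ex[OF exP[of n]] .
  define y where "y n = dg*((a0 + \<sigma> n * da) - of_int (fst (P n))) - da*((g0 + \<sigma> n * dg) - of_int (snd (P n)))" for n
  have gy: "gen da dg (y n) \<and> Lt da dg (y n) = c n" for n
    unfolding y_def using exit_y[OF conjunct2[OF Pp[of n]] d pA pC] by blast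
  have stepy: "y (n + 1) = Tm da dg (y n)" for n
  proof -
    define l where "l = c n"
    define i where "i = fst (P n)"
    define j where "j = snd (P n)"
    define i2 where "i2 = i + fst (stp l)"
    define j2 where "j2 = j + snd (stp l)"
    have X: "ExR l (a0 + \<sigma> n * da) (g0 + \<sigma> n * dg) i j" and lat: "3 dvd (i - j)"
      using Pp[of n] unfolding l_def i_def j_def by auto
    have lat2: "3 dvd (i2 - j2)" unfolding i2_def j2_def using lat by (cases l) (simp_all; presburger)+
    note ini = exit_init[OF X, of da dg, folded i2_def j2_def l_def]
    have ini': "-1 \<le> a0 + \<sigma> n * da - of_int i2" "a0 + \<sigma> n * da - of_int i2 < 1"
      "-1 \<le> g0 + \<sigma> n * dg - of_int j2" "g0 + \<sigma> n * dg - of_int j2 < 1"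
      "-1 \<le> (a0 + \<sigma> n * da - of_int i2) + (g0 + \<sigma> n * dg - of_int j2)"
      "(a0 + \<sigma> n * da - of_int i2) + (g0 + \<sigma> n * dg - of_int j2) < 1"
      "a0 + \<sigma> n * da - of_int i2 = -1 \<Longrightarrow> 0 < da" "g0 + \<sigma> n * dg - of_int j2 = -1 \<Longrightarrow> 0 < dg"
      using exit_init[OF X, of da dg] pA[of n] pC[of n] unfolding i2_def j2_def l_def by auto
    obtain t1 where t1: "\<sigma> n < t1" "\<And>t l. \<sigma> n < t \<Longrightarrow> t < t1 \<Longrightarrow> \<not> Ed l (a0 + t*da) (g0 + t*dg)"
      and l': "\<exists>l'. ExR l' (a0 + t1*da) (g0 + t1*dg) i2 j2"
      using exit_step[OF nm d lat2 ini'] by blast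
    obtain l' where X': "ExR l' (a0 + t1*da) (g0 + t1*dg) i2 j2" using l' by blast
    have "t1 \<in> range \<sigma>" unfolding rg using Ex_Ed[OF lat2 X'] by blast
    then obtain m where m: "\<sigma> m = t1" by blast
    have "n < m" using strict_mono_less[OF sm] m t1(1) by blast
    then have "\<sigma> (n+1) \<le> t1" using strict_mono_less_eq[OF sm, of "n+1" m] m by simp
    moreover have "\<not> \<sigma> (n+1) < t1"
    proof
      assume lt: "\<sigma> (n+1) < t1"
      have "\<sigma> n < \<sigma> (n+1)" using strict_mono_less[OF sm] by simp
      moreover have "\<sigma> (n+1) \<in> range \<sigma>" by simp
      ultimately show False using t1(2)[OF _ lt] unfolding rg by blast
    qed
    ultimately have s1: "\<sigma> (n+1) = t1" by simp
    have cl: "c (n+1) = l'" using exit_label[OF X'] cn s1 by metis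
    have P1: "fst (P (n+1)) = i2 \<and> snd (P (n+1)) = j2"
      using exit_uniq[OF conjunct2[OF Pp[of "n+1"]]] X' cl s1 by metis
    have "y (n+1) = dg*((a0 + t1 * da) - of_int i2) - da*((g0 + t1 * dg) - of_int j2)"
      unfolding y_def using s1 P1 by simp
    also have "\<dots> = y n - (dg * of_int (i2 - i) - da * of_int (j2 - j))"
      unfolding y_def i_def[symmetric] j_def[symmetric] by (simp add: algebra_simps)
    finally have e: "y (n+1) = y n - (dg * of_int (i2 - i) - da * of_int (j2 - j))" .
    have lt: "Lt da dg (y n) = l" using gy unfolding l_def by simp
    show ?thesis
    proof (cases l)
      case A then show ?thesis using e Tm_Lt(1)[OF lt[unfolded A]] unfolding i2_def j2_def by simp
    next
      case B then show ?thesis using e Tm_Lt(3)[OF lt[unfolded B]] unfolding i2_def j2_def by simp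
    next
      case C then show ?thesis using e Tm_Lt(2)[OF lt[unfolded C]] unfolding i2_def j2_def by simp
    qed
  qed
  have "Good UNIV da dg y c id" unfolding Good_def
    using d gy stepy consec_UNIV unb_UNIV by auto
  then show ?thesis by blast
qed



definition CSp :: "real \<Rightarrow> real \<Rightarrow> real \<Rightarrow> real \<Rightarrow> (int \<Rightarrow> lbl) \<Rightarrow> bool" where
  "CSp a0 g0 da dg c \<longleftrightarrow> (\<forall>t. \<not> MK (a0 + t*da) (g0 + t*dg)) \<and> (da \<noteq> 0 \<or> dg \<noteq> 0) \<and>
     (\<exists>\<sigma> :: int \<Rightarrow> real. strict_mono \<sigma> \<and> range \<sigma> = {t. \<exists>l. Ed l (a0 + t*da) (g0 + t*dg)} \<and>
        (\<forall>n. Ed (c n) (a0 + \<sigma> n * da) (g0 + \<sigma> n * dg)))"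

definition GoodEx :: "(int \<Rightarrow> lbl) \<Rightarrow> bool" where
  "GoodEx c \<longleftrightarrow> (\<exists>da dg y \<pi>. Good UNIV da dg y c \<pi>)"

definition rr :: "lbl \<Rightarrow> lbl" where "rr l = (case l of A \<Rightarrow> B | B \<Rightarrow> C | C \<Rightarrow> A)"
definition ri :: "lbl \<Rightarrow> lbl" where "ri l = (case l of A \<Rightarrow> C | B \<Rightarrow> A | C \<Rightarrow> B)"

lemma rr_ri[simp]: "rr (ri l) = l" by (cases l) (auto simp: rr_def ri_def)
lemma inj_rr: "inj rr" by (rule injI) (auto simp: rr_def split: lbl.splits)

lemma ex_rr: "(\<exists>l. P (rr l)) \<longleftrightarrow> (\<exists>l. P l)"
proof
  assume "\<exists>l. P l" then obtain l where "P l" by blast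
  then have "P (rr (ri l))" by simp
  then show "\<exists>l. P (rr l)" by blast
qed blast

lemma ex_rr_Ed: "(\<exists>l. Ed (rr l) a g) \<longleftrightarrow> (\<exists>l. Ed l a g)"
  using ex_rr[of "\<lambda>l. Ed l a g"] by simp

lemma sd_rot: "sd l (x + y) (-x) \<longleftrightarrow> sd (rr l) x y"
  by (cases l) (auto simp: rr_def)

lemma Ed_rot: "Ed l (a + g) (-a) \<longleftrightarrow> Ed (rr l) a g"
proof
  assume "Ed l (a + g) (-a)"
  then obtain i j :: int where ij: "3 dvd (i - j)" "sd l (a + g - of_int i) (- a - of_int j)" unfolding Ed_def by blast
  have e1: "a + g - of_int i = (a - of_int (-j)) + (g - of_int (i + j))" by simp
  have e2: "- a - of_int j = - (a - of_int (-j))" by simp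
  have "sd (rr l) (a - of_int (-j)) (g - of_int (i + j))" using ij(2) unfolding e1 e2 sd_rot .
  moreover have "3 dvd ((-j) - (i + j))" using ij(1) by presburger
  ultimately show "Ed (rr l) a g" unfolding Ed_def by blast
next
  assume "Ed (rr l) a g"
  then obtain i j :: int where ij: "3 dvd (i - j)" "sd (rr l) (a - of_int i) (g - of_int j)" unfolding Ed_def by blast
  have e1: "a + g - of_int (i + j) = (a - of_int i) + (g - of_int j)" by simp
  have e2: "- a - of_int (-i) = - (a - of_int i)" by simp
  have "sd l (a + g - of_int (i + j)) (- a - of_int (-i))" unfolding e1 e2 sd_rot using ij(2) .
  moreover have "3 dvd ((i + j) - (-i))" using ij(1) by presburger
  ultimately show "Ed l (a + g) (-a)" unfolding Ed_def by blast
qed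

lemma MK_rot: "MK (a + g) (-a) \<longleftrightarrow> MK a g"
proof
  assume "MK (a + g) (-a)"
  then obtain i j :: int where ij: "a + g = of_int i" "-a = of_int j" "\<not> 3 dvd (i - j)" unfolding MK_def by blast
  have "a = of_int (-j)" "g = of_int (i + j)" using ij by (simp_all add: algebra_simps)
  moreover have "\<not> 3 dvd ((-j) - (i + j))" using ij(3) by presburger
  ultimately show "MK a g" unfolding MK_def by blast
next
  assume "MK a g"
  then obtain i j :: int where ij: "a = of_int i" "g = of_int j" "\<not> 3 dvd (i - j)" unfolding MK_def by blast
  have "a + g = of_int (i + j)" "-a = of_int (-i)" using ij by simp_all
  moreover have "\<not> 3 dvd ((i + j) - (-i))" using ij(3) by presburger
  ultimately show "MK (a + g) (-a)" unfolding MK_def by blast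
qed

lemma CSp_rot:
  assumes "CSp a0 g0 da dg c"
  shows "CSp (a0 + g0) (-a0) (da + dg) (-da) (ri \<circ> c)"
proof -
  obtain \<sigma> :: "int \<Rightarrow> real" where nm: "\<forall>t. \<not> MK (a0 + t*da) (g0 + t*dg)" and nz: "da \<noteq> 0 \<or> dg \<noteq> 0"
    and sm: "strict_mono \<sigma>" and rg: "range \<sigma> = {t. \<exists>l. Ed l (a0 + t*da) (g0 + t*dg)}"
    and cn: "\<forall>n. Ed (c n) (a0 + \<sigma> n * da) (g0 + \<sigma> n * dg)"
    using assms unfolding CSp_def by blast
  have ea: "\<And>t. (a0 + g0) + t*(da + dg) = (a0 + t*da) + (g0 + t*dg)" by (simp add: algebra_simps)
  have eg: "\<And>t. - a0 + t*(- da) = - (a0 + t*da)" by (simp add: algebra_simps)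
  have "\<forall>t. \<not> MK ((a0 + g0) + t*(da + dg)) (- a0 + t*(- da))" unfolding ea eg MK_rot using nm by blast
  moreover have "da + dg \<noteq> 0 \<or> - da \<noteq> 0" using nz by auto
  moreover have "range \<sigma> = {t. \<exists>l. Ed l ((a0 + g0) + t*(da + dg)) (- a0 + t*(- da))}"
    unfolding ea eg Ed_rot rg ex_rr_Ed ..
  moreover have "\<forall>n. Ed ((ri \<circ> c) n) ((a0 + g0) + \<sigma> n *(da + dg)) (- a0 + \<sigma> n *(- da))"
    unfolding ea eg Ed_rot using cn by simp
  ultimately show ?thesis unfolding CSp_def using sm by blast
qed

lemma GoodEx_rot: "GoodEx (ri \<circ> c) \<Longrightarrow> GoodEx c"
proof -
  assume "GoodEx (ri \<circ> c)"
  then obtain da dg y \<pi> where G: "Good UNIV da dg y (ri \<circ> c) \<pi>" unfolding GoodEx_def by blast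
  note F = good_facts[OF G]
  have cc: "c n = (rr \<circ> \<pi>) (Lt da dg (y n))" for n
  proof -
    have "c n = rr ((ri \<circ> c) n)" by simp
    also have "\<dots> = rr (\<pi> (Lt da dg (y n)))" using F(7)[of n] by simp
    finally show ?thesis by simp
  qed
  have "Good UNIV da dg y c (rr \<circ> \<pi>)" unfolding Good_def
  proof (intro conjI ballI allI impI)
    show "0 \<le> da" "0 \<le> dg" "0 < da + dg" using F by auto
    show "inj (rr \<circ> \<pi>)" using inj_compose[OF inj_rr F(4)] .
    show "unb UNIV" by (rule F(5))
  next
    fix n :: int assume "n \<in> UNIV"
    show "gen da dg (y n)" using F(6) by simp
    show "c n = (rr \<circ> \<pi>) (Lt da dg (y n))" by (rule cc)
  next
    fix n m :: int assume "consec UNIV n m"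
    then show "y m = Tm da dg (y n)" using F(8) by blast
  qed
  then show "GoodEx c" unfolding GoodEx_def by blast
qed

lemma GoodEx_sector:
  assumes cs: "CSp a0 g0 da dg c" and d: "0 \<le> da" "0 \<le> dg"
  shows "GoodEx c"
proof -
  obtain \<sigma> :: "int \<Rightarrow> real" where nm: "\<forall>t. \<not> MK (a0 + t*da) (g0 + t*dg)" and nz: "da \<noteq> 0 \<or> dg \<noteq> 0"
    and sm: "strict_mono \<sigma>" and rg: "range \<sigma> = {t. \<exists>l. Ed l (a0 + t*da) (g0 + t*dg)}"
    and cn: "\<forall>n. Ed (c n) (a0 + \<sigma> n * da) (g0 + \<sigma> n * dg)"
    using cs unfolding CSp_def by blast
  have s: "0 < da + dg"
  proof (cases "da = 0")
    case True then show ?thesis using nz d by simp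
  next
    case False then show ?thesis using d by simp
  qed
  obtain y where "Good UNIV da dg y c id" using geo_sector[OF nm d s sm rg cn] by blast
  then show ?thesis unfolding GoodEx_def by blast
qed

lemma GoodEx_all:
  assumes cs: "CSp a0 g0 da dg c"
  shows "GoodEx c"
proof -
  note r1 = CSp_rot[OF cs]
  note r2 = CSp_rot[OF r1]
  note r3 = CSp_rot[OF r2]
  note r4 = CSp_rot[OF r3]
  note r5 = CSp_rot[OF r4]
  consider "0 \<le> da" "0 \<le> dg" | "0 \<le> da + dg" "da \<le> 0" | "0 \<le> dg" "da + dg \<le> 0"
    | "da \<le> 0" "dg \<le> 0" | "da + dg \<le> 0" "0 \<le> da" | "dg \<le> 0" "0 \<le> da + dg" by linarith
  then show ?thesis
  proof cases
    case 1 then show ?thesis using GoodEx_sector[OF cs] by blast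
  next
    case 2
    have "GoodEx (ri \<circ> c)" by (rule GoodEx_sector[OF r1]) (use 2 in linarith)+
    then show ?thesis by (rule GoodEx_rot)
  next
    case 3
    have "GoodEx (ri \<circ> (ri \<circ> c))" by (rule GoodEx_sector[OF r2]) (use 3 in linarith)+
    then have "GoodEx (ri \<circ> c)" by (rule GoodEx_rot)
    then show ?thesis by (rule GoodEx_rot)
  next
    case 4
    have "GoodEx (ri \<circ> (ri \<circ> (ri \<circ> c)))" by (rule GoodEx_sector[OF r3]) (use 4 in linarith)+
    then have "GoodEx (ri \<circ> (ri \<circ> c))" by (rule GoodEx_rot)
    then have "GoodEx (ri \<circ> c)" by (rule GoodEx_rot)
    then show ?thesis by (rule GoodEx_rot)
  next
    case 5
    have "GoodEx (ri \<circ> (ri \<circ> (ri \<circ> (ri \<circ> c))))" by (rule GoodEx_sector[OF r4]) (use 5 in linarith)+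
    then have "GoodEx (ri \<circ> (ri \<circ> (ri \<circ> c)))" by (rule GoodEx_rot)
    then have "GoodEx (ri \<circ> (ri \<circ> c))" by (rule GoodEx_rot)
    then have "GoodEx (ri \<circ> c)" by (rule GoodEx_rot)
    then show ?thesis by (rule GoodEx_rot)
  next
    case 6
    have "GoodEx (ri \<circ> (ri \<circ> (ri \<circ> (ri \<circ> (ri \<circ> c)))))" by (rule GoodEx_sector[OF r5]) (use 6 in linarith)+
    then have "GoodEx (ri \<circ> (ri \<circ> (ri \<circ> (ri \<circ> c))))" by (rule GoodEx_rot)
    then have "GoodEx (ri \<circ> (ri \<circ> (ri \<circ> c)))" by (rule GoodEx_rot)
    then have "GoodEx (ri \<circ> (ri \<circ> c))" by (rule GoodEx_rot)
    then have "GoodEx (ri \<circ> c)" by (rule GoodEx_rot)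
    then show ?thesis by (rule GoodEx_rot)
  qed
qed

lemma CSp_link:
  assumes lt: "linear_trajectory p v" and cs: "is_cutting_seq p v c"
  shows "CSp (ca p) (cg p) (ca v) (cg v) c"
proof -
  have zc: "\<And>t. ca (p + of_real t * v) = ca p + t * ca v" "\<And>t. cg (p + of_real t * v) = cg p + t * cg v"
    by (simp_all add: ca_add cg_add ca_scale cg_scale)
  have v0: "v \<noteq> 0" and nmk: "\<forall>t. p + of_real t * v \<notin> marked_lifts" using lt unfolding linear_trajectory_def by auto
  have "ca v \<noteq> 0 \<or> cg v \<noteq> 0"
  proof (rule ccontr)
    assume "\<not> (ca v \<noteq> 0 \<or> cg v \<noteq> 0)"
    then have "v = 0" unfolding coord_eq by (simp add: ca_def cg_def)
    then show False using v0 by simp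
  qed
  moreover have "\<forall>t. \<not> MK (ca p + t * ca v) (cg p + t * cg v)"
  proof (intro allI notI)
    fix t assume "MK (ca p + t * ca v) (cg p + t * cg v)"
    then have "MK (ca (p + of_real t * v)) (cg (p + of_real t * v))" by (simp only: zc)
    then have "p + of_real t * v \<in> marked_lifts" by (rule marked_MK)
    then show False using nmk by blast
  qed
  moreover obtain \<sigma> :: "int \<Rightarrow> real" where sm: "strict_mono \<sigma>"
    and rg: "range \<sigma> = {t. \<exists>l. p + of_real t * v \<in> edges l}" and cn: "\<forall>n. p + of_real (\<sigma> n) * v \<in> edges (c n)"
    using cs unfolding is_cutting_seq_def by blast
  have "range \<sigma> = {t. \<exists>l. Ed l (ca p + t * ca v) (cg p + t * cg v)}" unfolding rg edges_Ed zc ..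
  moreover have "\<forall>n. Ed (c n) (ca p + \<sigma> n * ca v) (cg p + \<sigma> n * cg v)" using cn unfolding edges_Ed zc .
  ultimately show ?thesis unfolding CSp_def using sm by blast
qed

theorem mainTheorem6:
  fixes p v :: complex and c :: "int \<Rightarrow> lbl"
  assumes "linear_trajectory p v"
    and "is_cutting_seq p v c"
  shows "infinitely_derivable c"
proof -
  have "GoodEx c" using GoodEx_all[OF CSp_link[OF assms]] .
  then obtain da dg y \<pi> where "Good UNIV da dg y c \<pi>" unfolding GoodEx_def by blast
  then show ?thesis by (rule good_infinitely_derivable)
qed

end
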